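(* Let $m=m(n)$ satisfy $m(n)\to\infty$ and $m(n)=o(n)$, and let $G_n=K_{m,n-m}$ be the complete bipartite graph with parts of sizes $m$ and $n-m$. Let $N_n$ be the jump count to meeting from distance one on $G_n$. Then $m^{-1}N_n\xrightarrow{D}\mathrm{Exp}(1/4)$. Consequently, if $\lambda_n,\gamma_n\to\infty$ with $\gamma_n=o(\lambda_n/m)$, the end of epidemic time $T_n$ on $G_n$ with walking rate $\lambda_n$ and recovery rate $\gamma_n$ satisfies \[ 4\,\frac{m\gamma_n^2}{\lambda_n}\,T_n\xrightarrow{D}\mathrm{Exp}(1). \]
   Context: Model on a finite connected undirected edge-transitive graph $G$: two agents perform independent continuous-time simple random walks, each holding at a vertex for an $\mathrm{Exp}(\lambda)$ time and then jumping to a uniformly chosen neighbour. Each agent is susceptible or infected; whenever they occupy the same vertex and at least one is infected, both become infected immediately; each infected agent independently recovers after an $\mathrm{Exp}(\gamma)$ time. Initially both are infected at the same vertex. The end of epidemic time is $T=\inf\{t\ge0:\text{both agents are susceptible}\}$. $N$ is the total number of jumps (of both walkers combined) until the two walkers first occupy the same vertex, starting from the two endpoints of an edge. $\mathrm{Exp}(\mu)$ denotes the exponential law with rate $\mu$. *)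

theory Defs
  imports "HOL-Probability.Probability"
begin

text \<open>A graph is given by a vertex set V and an adjacency relation E (only
  the restriction of E to V matters).\<close>

definition nbrs :: "'v set \<Rightarrow> ('v \<Rightarrow> 'v \<Rightarrow> bool) \<Rightarrow> 'v \<Rightarrow> 'v set" where
  "nbrs V E v = {w \<in> V. E v w}"

definition walk_step :: "'v set \<Rightarrow> ('v \<Rightarrow> 'v \<Rightarrow> bool) \<Rightarrow> 'v \<Rightarrow> 'v pmf" where
  "walk_step V E v = pmf_of_set (nbrs V E v)"

definition bip_V :: "nat \<Rightarrow> nat \<Rightarrow> (bool \<times> nat) set" where
  "bip_V a b = {(False, i) | i. i < a} \<union> {(True, j) | j. j < b}"

definition bip_E :: "bool \<times> nat \<Rightarrow> bool \<times> nat \<Rightarrow> bool" where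
  "bip_E x y = (fst x \<noteq> fst y)"

fun hit_within :: "('s \<Rightarrow> 's pmf) \<Rightarrow> ('s \<Rightarrow> bool) \<Rightarrow> nat \<Rightarrow> 's \<Rightarrow> real" where
  "hit_within K A 0 s = (if A s then 1 else 0)"
| "hit_within K A (Suc k) s =
     (if A s then 1 else measure_pmf.expectation (K s) (hit_within K A k))"

text \<open>Both walkers jump at the same rate, so each jump of the pair is made by
  walker 1 or walker 2 with probability 1/2.\<close>
definition pair_step :: "'v set \<Rightarrow> ('v \<Rightarrow> 'v \<Rightarrow> bool) \<Rightarrow> 'v \<times> 'v \<Rightarrow> ('v \<times> 'v) pmf" where
  "pair_step V E p = bind_pmf (bernoulli_pmf (1/2)) (\<lambda>b.
      if b then map_pmf (\<lambda>x'. (x', snd p)) (walk_step V E (fst p))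
           else map_pmf (\<lambda>y'. (fst p, y')) (walk_step V E (snd p)))"

text \<open>Distribution function of N (total number of jumps until the walkers first
  occupy the same vertex), started from (u,v): meet_cdf V E u v y = P(N \<le> y).\<close>
definition meet_cdf :: "'v set \<Rightarrow> ('v \<Rightarrow> 'v \<Rightarrow> bool) \<Rightarrow> 'v \<Rightarrow> 'v \<Rightarrow> real \<Rightarrow> real" where
  "meet_cdf V E u v y =
     (if y < 0 then 0 else hit_within (pair_step V E) (\<lambda>p. fst p = snd p) (nat \<lfloor>y\<rfloor>) (u, v))"

text \<open>State: (position 1, position 2, agent 1 infected, agent 2 infected).
  Infection rule: whenever both are at the same vertex and one is infected,
  both are infected.\<close>
definition infect :: "'v \<times> 'v \<times> bool \<times> bool \<Rightarrow> 'v \<times> 'v \<times> bool \<times> bool" where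
  "infect s = (case s of (x, y, ix, iy) \<Rightarrow>
      if x = y \<and> (ix \<or> iy) then (x, y, True, True) else (x, y, ix, iy))"

text \<open>Poisson-clock (uniformised) construction: each agent carries a rate lam
  clock for jumps and a rate gam clock for recoveries (a recovery mark of a
  susceptible agent has no effect).  The superposition is a Poisson process of
  rate 2(lam+gam); at each of its events one of the four clocks rings, jump
  vs. recovery with probabilities lam/(lam+gam), gam/(lam+gam), each agent
  with probability 1/2.  epi_step is the resulting embedded transition.\<close>
definition epi_step :: "'v set \<Rightarrow> ('v \<Rightarrow> 'v \<Rightarrow> bool) \<Rightarrow> real \<Rightarrow> real \<Rightarrow>
    'v \<times> 'v \<times> bool \<times> bool \<Rightarrow> ('v \<times> 'v \<times> bool \<times> bool) pmf" where
  "epi_step V E lam gam s = (case s of (x, y, ix, iy) \<Rightarrow>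
     bind_pmf (bernoulli_pmf (lam / (lam + gam))) (\<lambda>jump.
     bind_pmf (bernoulli_pmf (1/2)) (\<lambda>who.
       map_pmf infect
         (if jump then
            (if who then map_pmf (\<lambda>x'. (x', y, ix, iy)) (walk_step V E x)
                    else map_pmf (\<lambda>y'. (x, y', ix, iy)) (walk_step V E y))
          else return_pmf (if who then (x, y, False, iy) else (x, y, ix, False))))))"

definition both_susceptible :: "'v \<times> 'v \<times> bool \<times> bool \<Rightarrow> bool" where
  "both_susceptible s = (case s of (x, y, ix, iy) \<Rightarrow> \<not> ix \<and> \<not> iy)"

definition end_cdf :: "'v set \<Rightarrow> ('v \<Rightarrow> 'v \<Rightarrow> bool) \<Rightarrow> real \<Rightarrow> real \<Rightarrow> 'v \<Rightarrow> real \<Rightarrow> real" where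
  "end_cdf V E lam gam v0 t =
     (if t < 0 then 0 else
        (\<Sum>k. exp (- (2 * (lam + gam) * t)) * (2 * (lam + gam) * t) ^ k / fact k
             * hit_within (epi_step V E lam gam) both_susceptible k (v0, v0, True, True)))"

definition exp_cdf :: "real \<Rightarrow> real \<Rightarrow> real" where
  "exp_cdf mu x = (if x < 0 then 0 else 1 - exp (- mu * x))"

end

theory Submission
  imports Defs "HOL-Real_Asymp.Real_Asymp"
begin


lemma integral_bind_pmf_bdd:
  fixes f :: "'b \<Rightarrow> real"
  assumes "\<And>x. \<bar>f x\<bar> \<le> B"
  shows "measure_pmf.expectation (bind_pmf M N) f = measure_pmf.expectation M (\<lambda>x. measure_pmf.expectation (N x) f)"
  unfolding measure_pmf_bind
  apply (rule integral_bind[where K="count_space UNIV" and B=B and B'=1])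
  using assms by (auto simp: measure_pmf_in_subprob_space intro!: measurable_pmf_measure1 measure_pmf.finite_measure_axioms)

lemma pmf_integrable_bdd:
  fixes f :: "'b \<Rightarrow> real"
  assumes "\<And>x. \<bar>f x\<bar> \<le> B"
  shows "integrable (measure_pmf M) f"
  by (rule measure_pmf.integrable_const_bound[where B=B]) (use assms in auto)

lemma hit_bounds: "0 \<le> hit_within K A k s \<and> hit_within K A k s \<le> 1"
proof (induction k arbitrary: s)
  case 0 then show ?case by simp
next
  case (Suc k)
  have int: "integrable (measure_pmf (K s)) (hit_within K A k)"
    by (rule pmf_integrable_bdd[where B=1]) (use Suc in auto)
  have "0 \<le> measure_pmf.expectation (K s) (hit_within K A k)"
    by (rule measure_pmf.integral_ge_const[OF int]) (use Suc in auto)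
  moreover have "measure_pmf.expectation (K s) (hit_within K A k) \<le> 1"
    by (rule measure_pmf.integral_le_const[OF int]) (use Suc in auto)
  ultimately show ?case by simp
qed

lemma epi_exp:
  fixes G :: "'v \<times> 'v \<times> bool \<times> bool \<Rightarrow> real"
  assumes bdd: "\<And>s. \<bar>G s\<bar> \<le> B" and p0: "0 \<le> lam / (lam + gam)" and p1: "lam / (lam + gam) \<le> 1"
  shows "measure_pmf.expectation (epi_step V E lam gam (x, y, ix, iy)) G =
    lam / (lam + gam) * (1/2 * measure_pmf.expectation (walk_step V E x) (\<lambda>x'. G (infect (x', y, ix, iy)))
                       + 1/2 * measure_pmf.expectation (walk_step V E y) (\<lambda>y'. G (infect (x, y', ix, iy))))
  + (1 - lam / (lam + gam)) * (1/2 * G (infect (x, y, False, iy)) + 1/2 * G (infect (x, y, ix, False)))"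
proof -
  have bdd2: "\<bar>measure_pmf.expectation M G\<bar> \<le> B" for M
  proof -
    have "\<bar>measure_pmf.expectation M G\<bar> \<le> measure_pmf.expectation M (\<lambda>s. \<bar>G s\<bar>)"
      by (rule integral_abs_bound)
    also have "\<dots> \<le> B"
      by (rule measure_pmf.integral_le_const) (auto intro!: pmf_integrable_bdd[where B=B] simp: bdd)
    finally show ?thesis .
  qed
  show ?thesis
    unfolding epi_step_def prod.case
    apply (subst integral_bind_pmf_bdd[where B=B], rule bdd)
    apply (simp add: p0 p1)
    apply (subst integral_bind_pmf_bdd[where B=B], rule bdd)+
    apply (simp add: algebra_simps)
    done
qed


lemma pair_exp:
  fixes G :: "'v \<times> 'v \<Rightarrow> real"
  assumes bdd: "\<And>s. \<bar>G s\<bar> \<le> B"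
  shows "measure_pmf.expectation (pair_step V E (x, y)) G =
    1/2 * measure_pmf.expectation (walk_step V E x) (\<lambda>x'. G (x', y))
  + 1/2 * measure_pmf.expectation (walk_step V E y) (\<lambda>y'. G (x, y'))"
  unfolding pair_step_def
  apply (subst integral_bind_pmf_bdd[where B=B], rule bdd)
  apply (simp add: algebra_simps)
  done

definition bpart :: "nat \<Rightarrow> nat \<Rightarrow> bool \<Rightarrow> (bool \<times> nat) set" where
  "bpart a b c = {w \<in> bip_V a b. fst w = c}"

lemma nbrs_bip: "nbrs (bip_V a b) bip_E x = bpart a b (\<not> fst x)"
  unfolding nbrs_def bpart_def bip_E_def by auto

lemma part_False: "bpart a b False = (\<lambda>i. (False, i)) ` {..<a}"
  unfolding bpart_def bip_V_def by auto

lemma part_True: "bpart a b True = (\<lambda>i. (True, i)) ` {..<b}"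
  unfolding bpart_def bip_V_def by auto

lemma card_part: "card (bpart a b c) = (if c then b else a)"
  by (cases c) (simp_all add: part_False part_True card_image inj_on_def)

lemma finite_part: "finite (bpart a b c)"
  by (cases c) (simp_all add: part_False part_True)

lemma part_ne: "1 \<le> a \<Longrightarrow> 1 \<le> b \<Longrightarrow> bpart a b c \<noteq> {}"
  using card_part[of a b c] by (cases c) auto

lemma walk_exp:
  assumes "1 \<le> a" "1 \<le> b"
  shows "measure_pmf.expectation (walk_step (bip_V a b) bip_E x) f =
     (\<Sum>w\<in>bpart a b (\<not> fst x). f w) / card (bpart a b (\<not> fst x))"
  unfolding walk_step_def nbrs_bip
  by (rule integral_pmf_of_set) (use finite_part part_ne[OF assms] in auto)

lemma avg_const:
  assumes "finite N" "N \<noteq> {}" "\<And>w. w \<in> N \<Longrightarrow> f w = c"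
  shows "(\<Sum>w\<in>N. f w) / card N = (c::real)"
proof -
  have "(\<Sum>w\<in>N. f w) = card N * c" using assms by simp
  moreover have "card N > 0" using assms by (simp add: card_gt_0_iff)
  ultimately show ?thesis by simp
qed

lemma avg_one:
  assumes "finite N" "y \<in> N" "\<And>w. w \<in> N \<Longrightarrow> w \<noteq> y \<Longrightarrow> f w = c"
  shows "(\<Sum>w\<in>N. f w) / card N = f y / card N + (1 - 1 / card N) * (c::real)"
proof -
  have pos: "card N > 0" using assms by (auto simp: card_gt_0_iff)
  have "(\<Sum>w\<in>N. f w) = f y + (\<Sum>w\<in>N-{y}. f w)" using assms by (simp add: sum.remove)
  also have "(\<Sum>w\<in>N-{y}. f w) = (card N - 1) * c" using assms by (simp add: card_Diff_singleton)
  also have "real (card N - 1) = real (card N) - 1" using pos by (simp add: of_nat_diff)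
  finally have "(\<Sum>w\<in>N. f w) = f y + (real (card N) - 1) * c" .
  then show ?thesis using pos by (simp add: field_simps)
qed


datatype ls = LB0 | LB1 | LB2 | LO1 | LO2 | LA

fun lexp :: "real \<Rightarrow> real \<Rightarrow> ls \<Rightarrow> (ls \<Rightarrow> real) \<Rightarrow> real" where
  "lexp p mu LB0 g = (1-p) * g LB0 + p * g LB1"
| "lexp p mu LB1 g = p*mu*g LB0 + p*(1-mu)*g LB2 + (1-p)*g LO1"
| "lexp p mu LB2 g = p * g LB1 + (1-p) * g LO2"
| "lexp p mu LO1 g = p*mu*g LB0 + p*(1-mu)*g LO2 + (1-p)/2*g LO1 + (1-p)/2 * g LA"
| "lexp p mu LO2 g = p*g LO1 + (1-p)/2*g LO2 + (1-p)/2 * g LA"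
| "lexp p mu LA g = g LA"

fun surv :: "real \<Rightarrow> real \<Rightarrow> nat \<Rightarrow> ls \<Rightarrow> real" where
  "surv p mu 0 t = (if t = LA then 0 else 1)"
| "surv p mu (Suc k) t = (if t = LA then 0 else lexp p mu t (surv p mu k))"

lemma lexp_mono:
  assumes "0 \<le> p" "p \<le> 1" "0 \<le> mu" "mu \<le> 1" "\<And>x. g x \<le> h x"
  shows "lexp p mu t g \<le> lexp p mu t h"
  using assms by (cases t) (auto intro!: add_mono mult_left_mono)

lemma lexp_scale: "lexp p mu t (\<lambda>x. c * g x) = c * lexp p mu t g"
  by (cases t) (auto simp: algebra_simps)

lemma surv_bounds:
  assumes "0 \<le> p" "p \<le> 1" "0 \<le> mu" "mu \<le> 1"
  shows "0 \<le> surv p mu k t \<and> surv p mu k t \<le> 1"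
proof (induction k arbitrary: t)
  case 0 then show ?case by auto
next
  case (Suc k)
  have lo: "lexp p mu t (\<lambda>_. 0) \<le> lexp p mu t (surv p mu k)"
    by (rule lexp_mono) (use assms Suc in auto)
  have hi: "lexp p mu t (surv p mu k) \<le> lexp p mu t (\<lambda>_. 1)"
    by (rule lexp_mono) (use assms Suc in auto)
  have "lexp p mu t (\<lambda>_. 0) = 0" by (cases t) auto
  moreover have "t \<noteq> LA \<Longrightarrow> lexp p mu t (\<lambda>_. 1) = 1" by (cases t) (auto simp: algebra_simps)
  ultimately show ?case using lo hi by auto
qed

lemma surv_lower:
  assumes "0 \<le> p" "p \<le> 1" "0 \<le> mu" "mu \<le> 1" "0 \<le> \<alpha>" "0 \<le> W"
    and "w LA = 0" "\<And>t. t \<noteq> LA \<Longrightarrow> w t \<le> W"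
    and "\<And>t. t \<noteq> LA \<Longrightarrow> \<alpha> * w t \<le> lexp p mu t w"
  shows "\<alpha> ^ k * w t \<le> W * surv p mu k t"
proof (induction k arbitrary: t)
  case 0 then show ?case using assms by auto
next
  case (Suc k)
  show ?case
  proof (cases "t = LA")
    case True then show ?thesis using assms by simp
  next
    case False
    have "\<alpha> ^ Suc k * w t = \<alpha>^k * (\<alpha> * w t)" by simp
    also have "\<dots> \<le> \<alpha>^k * lexp p mu t w" using assms False by (intro mult_left_mono) auto
    also have "\<dots> = lexp p mu t (\<lambda>x. \<alpha>^k * w x)" by (simp add: lexp_scale)
    also have "\<dots> \<le> lexp p mu t (\<lambda>x. W * surv p mu k x)" by (rule lexp_mono) (use assms Suc in auto)
    also have "\<dots> = W * surv p mu (Suc k) t" using False by (simp add: lexp_scale)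
    finally show ?thesis .
  qed
qed

lemma surv_upper:
  assumes "0 \<le> p" "p \<le> 1" "0 \<le> mu" "mu \<le> 1" "0 \<le> \<beta>" "0 \<le> L"
    and "\<And>t. 0 \<le> w t" "\<And>t. t \<noteq> LA \<Longrightarrow> L \<le> w t"
    and "\<And>t. t \<noteq> LA \<Longrightarrow> lexp p mu t w \<le> \<beta> * w t"
  shows "L * surv p mu k t \<le> \<beta> ^ k * w t"
proof (induction k arbitrary: t)
  case 0 then show ?case using assms by auto
next
  case (Suc k)
  show ?case
  proof (cases "t = LA")
    case True then show ?thesis using assms by simp
  next
    case False
    have "L * surv p mu (Suc k) t = lexp p mu t (\<lambda>x. L * surv p mu k x)" using False by (simp add: lexp_scale)
    also have "\<dots> \<le> lexp p mu t (\<lambda>x. \<beta>^k * w x)" by (rule lexp_mono) (use assms Suc in auto)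
    also have "\<dots> = \<beta>^k * lexp p mu t w" by (simp add: lexp_scale)
    also have "\<dots> \<le> \<beta>^k * (\<beta> * w t)" using assms False by (intro mult_left_mono) auto
    also have "\<dots> = \<beta>^Suc k * w t" by simp
    finally show ?thesis .
  qed
qed

definition "svv (p::real) (r::real) = 1 - (1-p)/2 - r"
definition "evv (p::real) (r::real) = (1-p)/2 - r"
definition "Dv p mu r = (svv p r)^2 - p^2*(1-mu)"
definition "c1v p mu r = evv p r * (svv p r + p*(1-mu)) / Dv p mu r"
definition "c2v p mu r = evv p r * (svv p r + p) / Dv p mu r"
definition "d1v p r = r / p"
definition "d2v p mu r = (1-p) * c2v p mu r / (1 - r)"

definition wv :: "real \<Rightarrow> real \<Rightarrow> real \<Rightarrow> ls \<Rightarrow> real" where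
  "wv p mu r t = (case t of LB0 \<Rightarrow> 1 | LB1 \<Rightarrow> 1 - d1v p r | LB2 \<Rightarrow> 1 - d2v p mu r
      | LO1 \<Rightarrow> 1 - c1v p mu r | LO2 \<Rightarrow> 1 - c2v p mu r | LA \<Rightarrow> 0)"

lemma c_eqs:
  assumes "Dv p mu r \<noteq> 0"
  shows "c1v p mu r * svv p r - p*(1-mu) * c2v p mu r = evv p r"
    and "c2v p mu r * svv p r - p * c1v p mu r = evv p r"
proof -
  let ?s = "svv p r" and ?e = "evv p r" and ?D = "Dv p mu r"
  have D: "?D = ?s^2 - p^2*(1-mu)" by (simp add: Dv_def)
  have "c1v p mu r * ?s - p*(1-mu) * c2v p mu r = ?e * ((?s + p*(1-mu)) * ?s - p*(1-mu)*(?s+p)) / ?D"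
    using assms by (simp add: c1v_def c2v_def field_simps)
  also have "(?s + p*(1-mu)) * ?s - p*(1-mu)*(?s+p) = ?D" unfolding D by (simp add: algebra_simps power2_eq_square)
  finally show "c1v p mu r * svv p r - p*(1-mu) * c2v p mu r = evv p r" using assms by simp
  have "c2v p mu r * ?s - p * c1v p mu r = ?e * ((?s + p) * ?s - p*(?s+p*(1-mu))) / ?D"
    using assms by (simp add: c1v_def c2v_def field_simps)
  also have "(?s + p) * ?s - p*(?s+p*(1-mu)) = ?D" unfolding D by (simp add: algebra_simps power2_eq_square)
  finally show "c2v p mu r * svv p r - p * c1v p mu r = evv p r" using assms by simp
qed

lemma wv_eqs:
  assumes "p \<noteq> 0" "r \<noteq> 1" "Dv p mu r \<noteq> 0"
  shows "lexp p mu LB0 (wv p mu r) = (1-r) * wv p mu r LB0"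
    and "lexp p mu LB2 (wv p mu r) = (1-r) * wv p mu r LB2"
    and "lexp p mu LO1 (wv p mu r) = (1-r) * wv p mu r LO1"
    and "lexp p mu LO2 (wv p mu r) = (1-r) * wv p mu r LO2"
proof -
  note ce = c_eqs[OF assms(3)]
  show "lexp p mu LB0 (wv p mu r) = (1-r) * wv p mu r LB0"
    using assms by (simp add: wv_def d1v_def field_simps)
  have d2: "d2v p mu r * (1 - r) = (1-p) * c2v p mu r" using assms by (simp add: d2v_def)
  show "lexp p mu LB2 (wv p mu r) = (1-r) * wv p mu r LB2"
    using assms d2 by (simp add: wv_def d1v_def algebra_simps)
  show "lexp p mu LO1 (wv p mu r) = (1-r) * wv p mu r LO1"
    using ce(1) unfolding wv_def svv_def evv_def by (simp add: field_simps)
  show "lexp p mu LO2 (wv p mu r) = (1-r) * wv p mu r LO2"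
    using ce(2) unfolding wv_def svv_def evv_def by (simp add: field_simps)
qed

definition Gh :: "real \<Rightarrow> real \<Rightarrow> real \<Rightarrow> real" where
  "Gh h mu r = - 4*r^2 + 8*r^3 - 5*r^4 + 1*r^5 + 2*mu*r - 3*mu*r^2 + 1*mu*r^3 + 12*h*r - 6*h*r^2 - 8*h*r^3 + 4*h*r^4 - 16*h*mu*r + 18*h*mu*r^2 - 4*h*mu*r^3 - 8*h^2 - 38*h^2*r + 33*h^2*r^2 - 3*h^2*r^3 + 6*h^2*mu + 42*h^2*mu*r - 36*h^2*mu*r^2 + 4*h^2*mu*r^3 + 36*h^3 + 32*h^3*r - 22*h^3*r^2 - 30*h^3*mu - 40*h^3*mu*r + 24*h^3*mu*r^2 - 52*h^4 - 4*h^4*r + 48*h^4*mu + 8*h^4*mu*r + 24*h^5 - 24*h^5*mu"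

lemma Gh_poly: "(r + r*(1-2*h) - r*r)*(1-r)*((1-h-r)^2 - (1-2*h)^2*(1-mu))
   - (1-2*h)^2*(1-mu)*(2*h)*((h-r) * ((1-h-r) + (1-2*h)))
   - (1-2*h)*(2*h)*(1-r)*((h-r) * ((1-h-r) + (1-2*h)*(1-mu))) = Gh h mu r"
  unfolding Gh_def by algebra

lemma Gp_poly_h:
  assumes "p = 1 - 2*h"
  shows "(r + r*p - r*r)*(1-r)*Dv p mu r - p^2*(1-mu)*(1-p)*(evv p r * (svv p r + p))
   - p*(1-p)*(1-r)*(evv p r * (svv p r + p*(1-mu))) = Gh h mu r"
proof -
  have e1: "(1 - p)/2 = h" using assms by simp
  have s: "svv p r = 1-h-r" "evv p r = h - r" using e1 by (simp_all add: svv_def evv_def)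
  have q: "1 - p = 2*h" using assms by simp
  show ?thesis unfolding Dv_def s q unfolding assms by (rule Gh_poly)
qed

lemma Gp_poly: "(r + r*p - r*r)*(1-r)*Dv p mu r - p^2*(1-mu)*(1-p)*(evv p r * (svv p r + p))
   - p*(1-p)*(1-r)*(evv p r * (svv p r + p*(1-mu))) = Gh ((1-p)/2) mu r"
  by (rule Gp_poly_h) (simp add: field_simps)

lemma wv_B1:
  assumes "p \<noteq> 0" "r \<noteq> 1" "Dv p mu r \<noteq> 0"
  shows "(lexp p mu LB1 (wv p mu r) - (1-r) * wv p mu r LB1) * (p * (1-r) * Dv p mu r) = Gh ((1-p)/2) mu r"
proof -
  let ?D = "Dv p mu r"
  have c1: "c1v p mu r * ?D = evv p r * (svv p r + p*(1-mu))" using assms by (simp add: c1v_def)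
  have c2: "c2v p mu r * ?D = evv p r * (svv p r + p)" using assms by (simp add: c2v_def)
  have "lexp p mu LB1 (wv p mu r) - (1-r) * wv p mu r LB1
     = r/p + r - r*r/p - p*(1-mu)*(1-p)*c2v p mu r/(1-r) - (1-p)* c1v p mu r"
    using assms by (simp add: wv_def d1v_def d2v_def field_simps)
  also have "\<dots> * (p * (1-r) * ?D) = (r + r*p - r*r)*(1-r)*?D - p^2*(1-mu)*(1-p)*(c2v p mu r * ?D)
       - p*(1-p)*(1-r)*(c1v p mu r * ?D)"
    using assms by (simp add: field_simps power2_eq_square)
  also have "\<dots> = Gh ((1-p)/2) mu r" unfolding c1 c2 by (rule Gp_poly)
  finally show ?thesis .
qed


definition Hq :: "real \<Rightarrow> real \<Rightarrow> real \<Rightarrow> real \<Rightarrow> real" where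
  "Hq q mu rh t = - 4*t^2*rh^2 + 8*t^3*q*rh^3 - 5*t^4*q^2*rh^4 + 1*t^5*q^3*rh^5 + 2*t - 3*t^2*q*rh + 1*t^3*q^2*rh^2 + 6*t*rh - 3*t^2*q*rh^2 - 4*t^3*q^2*rh^3 + 2*t^4*q^3*rh^4 - 8*t*q + 9*t^2*q^2*rh - 2*t^3*q^3*rh^2 - 2 - (19/2)*t*q*rh + (33/4)*t^2*q^2*rh^2 - (3/4)*t^3*q^3*rh^3 + (3/2)*mu + (21/2)*t*q^2 - 9*t^2*q^3*rh + 1*t^3*q^4*rh^2 + (9/2)*q + 4*t*q^2*rh - (11/4)*t^2*q^3*rh^2 - (15/4)*q*mu - 5*t*q^3 + 3*t^2*q^4*rh - (13/4)*q^2 - (1/4)*t*q^3*rh + 3*q^2*mu + (1/2)*t*q^4 + (3/4)*q^3 - (3/4)*q^3*mu"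

lemma Gh_Hq0: "Gh (mu*rh/2) mu (t*(mu*rh)*rh) = (mu*rh)^2 * Hq (mu*rh) mu rh t"
  unfolding Gh_def Hq_def
  by (simp add: field_simps power2_eq_square power3_eq_cube power4_eq_xxxx power_numeral_reduce)

lemma Gh_Hq:
  assumes "q = mu * rh"
  shows "Gh (q/2) mu (t*q*rh) = q^2 * Hq q mu rh t"
  using Gh_Hq0 unfolding assms .

lemma Hq_lim:
  assumes "q \<longlonglongrightarrow> 0" "mu \<longlonglongrightarrow> 0" "rh \<longlonglongrightarrow> 0"
  shows "(\<lambda>n. Hq (q n) (mu n) (rh n) t) \<longlonglongrightarrow> 2*t - 2"
proof -
  have "(\<lambda>n. Hq (q n) (mu n) (rh n) t) \<longlonglongrightarrow> Hq 0 0 0 t"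
    unfolding Hq_def by (intro tendsto_intros assms)
  then show ?thesis by (simp add: Hq_def)
qed

definition "Dm mu rh t = -2*t*rh^2 + t^2*mu*rh^4 + 1 + rh + t*mu*rh^3 - 2*mu*rh - 3/4*mu*rh^2 + mu^2*rh^2"

lemma Dv_Dm: "Dv (1 - mu*rh) mu (t*(mu*rh)*rh) = mu * Dm mu rh t"
  unfolding Dv_def svv_def Dm_def by (simp add: field_simps power2_eq_square power3_eq_cube power4_eq_xxxx)

lemma evv_m: "evv (1 - mu*rh) (t*(mu*rh)*rh) = mu * (rh/2 - t*rh^2)"
  unfolding evv_def by (simp add: field_simps power2_eq_square)

lemma c1v_m: "mu \<noteq> 0 \<Longrightarrow> c1v (1 - mu*rh) mu (t*(mu*rh)*rh) =
   (rh/2 - t*rh^2) * (svv (1 - mu*rh) (t*(mu*rh)*rh) + (1 - mu*rh)*(1-mu)) / Dm mu rh t"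
  unfolding c1v_def Dv_Dm evv_m by simp

lemma c2v_m: "mu \<noteq> 0 \<Longrightarrow> c2v (1 - mu*rh) mu (t*(mu*rh)*rh) =
   (rh/2 - t*rh^2) * (svv (1 - mu*rh) (t*(mu*rh)*rh) + (1 - mu*rh)) / Dm mu rh t"
  unfolding c2v_def Dv_Dm evv_m by simp

lemma small_lims:
  fixes mu rh :: "nat \<Rightarrow> real" and t :: real
  assumes "\<And>n. mu n > 0" "mu \<longlonglongrightarrow> 0" "rh \<longlonglongrightarrow> 0"
  defines "p \<equiv> \<lambda>n. 1 - mu n * rh n" and "r \<equiv> \<lambda>n. t * (mu n * rh n) * rh n"
  shows "(\<lambda>n. Dm (mu n) (rh n) t) \<longlonglongrightarrow> 1"
    and "(\<lambda>n. c1v (p n) (mu n) (r n)) \<longlonglongrightarrow> 0"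
    and "(\<lambda>n. c2v (p n) (mu n) (r n)) \<longlonglongrightarrow> 0"
    and "(\<lambda>n. d1v (p n) (r n)) \<longlonglongrightarrow> 0"
    and "(\<lambda>n. d2v (p n) (mu n) (r n)) \<longlonglongrightarrow> 0"
    and "p \<longlonglongrightarrow> 1" "r \<longlonglongrightarrow> 0"
proof -
  have D: "(\<lambda>n. Dm (mu n) (rh n) t) \<longlonglongrightarrow> Dm 0 0 t" unfolding Dm_def by (intro tendsto_intros assms)
  then show D1: "(\<lambda>n. Dm (mu n) (rh n) t) \<longlonglongrightarrow> 1" by (simp add: Dm_def)
  show P: "p \<longlonglongrightarrow> 1" unfolding p_def using tendsto_diff[OF tendsto_const tendsto_mult[OF assms(2,3)], of 1] by simp
  show R: "r \<longlonglongrightarrow> 0" unfolding r_def using tendsto_mult[OF tendsto_mult[OF tendsto_const tendsto_mult[OF assms(2,3)]] assms(3), of t] by simp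
  have S: "(\<lambda>n. svv (p n) (r n)) \<longlonglongrightarrow> 1 - (1-1)/2 - 0" unfolding svv_def by (intro tendsto_intros P R) simp_all
  have "(\<lambda>n. (rh n/2 - t*rh n^2) * (svv (p n) (r n) + p n*(1-mu n)) / Dm (mu n) (rh n) t)
      \<longlonglongrightarrow> (0/2 - t*0^2) * ((1 - (1-1)/2 - 0) + 1*(1-0)) / 1"
    by (intro tendsto_intros assms S P D1) simp_all
  then show C1: "(\<lambda>n. c1v (p n) (mu n) (r n)) \<longlonglongrightarrow> 0"
    using c1v_m assms(1) unfolding p_def r_def by (simp add: less_imp_neq[symmetric])
  have "(\<lambda>n. (rh n/2 - t*rh n^2) * (svv (p n) (r n) + p n) / Dm (mu n) (rh n) t)
      \<longlonglongrightarrow> (0/2 - t*0^2) * ((1 - (1-1)/2 - 0) + 1) / 1"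
    by (intro tendsto_intros assms S P D1) simp_all
  then show C2: "(\<lambda>n. c2v (p n) (mu n) (r n)) \<longlonglongrightarrow> 0"
    using c2v_m assms(1) unfolding p_def r_def by (simp add: less_imp_neq[symmetric])
  show "(\<lambda>n. d1v (p n) (r n)) \<longlonglongrightarrow> 0"
    unfolding d1v_def using tendsto_divide[OF R P] by simp
  show "(\<lambda>n. d2v (p n) (mu n) (r n)) \<longlonglongrightarrow> 0"
    unfolding d2v_def using tendsto_divide[OF tendsto_mult[OF tendsto_diff[OF tendsto_const P] C2] tendsto_diff[OF tendsto_const R], of 1 1] by simp
qed

lemma sign_help:
  fixes X P Q H :: real
  assumes "X * P = Q * H" "P > 0" "Q > 0"
  shows "(0 < H \<longrightarrow> 0 \<le> X) \<and> (H < 0 \<longrightarrow> X \<le> 0)"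
proof (intro conjI impI)
  assume "0 < H" then have "0 < X * P" using assms by (metis mult_pos_pos)
  then show "0 \<le> X" using assms by (metis zero_less_mult_pos2 less_imp_le)
next
  assume "H < 0" then have XP: "X * P < 0" using assms by (metis mult_pos_neg)
  show "X \<le> 0"
  proof (rule ccontr)
    assume "\<not> X \<le> 0" then have "0 < X * P" using assms(2) by (metis mult_pos_pos not_le)
    then show False using XP by simp
  qed
qed

lemma chain_bounds:
  fixes mu rh :: "nat \<Rightarrow> real" and t :: real
  assumes mpos: "\<And>n. mu n > 0" and rpos: "\<And>n. rh n > 0" and mu0: "mu \<longlonglongrightarrow> 0" and rh0: "rh \<longlonglongrightarrow> 0" and tpos: "t > 0"
  defines "p \<equiv> \<lambda>n. 1 - mu n * rh n" and "r \<equiv> \<lambda>n. t * (mu n * rh n) * rh n"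
  shows "\<exists>W L. W \<longlonglongrightarrow> 1 \<and> L \<longlonglongrightarrow> 1
     \<and> (1 < t \<longrightarrow> (\<forall>\<^sub>F n in sequentially. \<forall>k. (1 - r n)^k \<le> W n * surv (p n) (mu n) k LB0))
     \<and> (t < 1 \<longrightarrow> (\<forall>\<^sub>F n in sequentially. \<forall>k. L n * surv (p n) (mu n) k LB0 \<le> (1 - r n)^k))"
proof -
  have lims: "(\<lambda>n. Dm (mu n) (rh n) t) \<longlonglongrightarrow> 1"
    "(\<lambda>n. c1v (p n) (mu n) (r n)) \<longlonglongrightarrow> 0"
    "(\<lambda>n. c2v (p n) (mu n) (r n)) \<longlonglongrightarrow> 0"
    "(\<lambda>n. d1v (p n) (r n)) \<longlonglongrightarrow> 0"
    "(\<lambda>n. d2v (p n) (mu n) (r n)) \<longlonglongrightarrow> 0"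
    "p \<longlonglongrightarrow> 1" "r \<longlonglongrightarrow> 0"
    unfolding p_def r_def by (rule small_lims[OF mpos mu0 rh0])+
  define Sg where "Sg = (\<lambda>n. \<bar>d1v (p n) (r n)\<bar> + \<bar>d2v (p n) (mu n) (r n)\<bar> + \<bar>c1v (p n) (mu n) (r n)\<bar> + \<bar>c2v (p n) (mu n) (r n)\<bar>)"
  have Sg0: "Sg \<longlonglongrightarrow> 0" unfolding Sg_def
    using tendsto_add[OF tendsto_add[OF tendsto_add[OF tendsto_rabs[OF lims(4)] tendsto_rabs[OF lims(5)]] tendsto_rabs[OF lims(2)]] tendsto_rabs[OF lims(3)]]
    by simp
  define W where "W = (\<lambda>n. 1 + Sg n)"
  define L where "L = (\<lambda>n. 1 - Sg n)"
  have W1: "W \<longlonglongrightarrow> 1" unfolding W_def using tendsto_add[OF tendsto_const Sg0, of 1] by simp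
  have L1: "L \<longlonglongrightarrow> 1" unfolding L_def using tendsto_diff[OF tendsto_const Sg0, of 1] by simp
  have Hl: "(\<lambda>n. Hq (mu n * rh n) (mu n) (rh n) t) \<longlonglongrightarrow> 2*t - 2"
    by (rule Hq_lim) (use tendsto_mult[OF mu0 rh0] mu0 rh0 in simp_all)
  have ev_basic: "\<forall>\<^sub>F n in sequentially. 0 \<le> p n \<and> p n \<le> 1 \<and> 0 < p n \<and> mu n \<le> 1 \<and> r n < 1 \<and> 0 \<le> r n
      \<and> 0 < Dm (mu n) (rh n) t \<and> Sg n \<le> 1"
  proof -
    have "\<forall>\<^sub>F n in sequentially. p n > 0" using lims(6) by (rule order_tendstoD) simp
    moreover have "\<forall>\<^sub>F n in sequentially. mu n < 1" using mu0 by (rule order_tendstoD) simp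
    moreover have "\<forall>\<^sub>F n in sequentially. r n < 1" using lims(7) by (rule order_tendstoD) simp
    moreover have "\<forall>\<^sub>F n in sequentially. Dm (mu n) (rh n) t > 0" using lims(1) by (rule order_tendstoD) simp
    moreover have "\<forall>\<^sub>F n in sequentially. Sg n < 1" using Sg0 by (rule order_tendstoD) simp
    ultimately show ?thesis
      by eventually_elim (use mpos rpos tpos in \<open>auto simp: p_def r_def intro!: mult_nonneg_nonneg less_imp_le\<close>)
  qed
  have key: "\<forall>\<^sub>F n in sequentially. (\<forall>s. s \<noteq> LB1 \<longrightarrow> s \<noteq> LA \<longrightarrow>
        lexp (p n) (mu n) s (wv (p n) (mu n) (r n)) = (1 - r n) * wv (p n) (mu n) (r n) s)
     \<and> (0 < Hq (mu n * rh n) (mu n) (rh n) t \<longrightarrow> 0 \<le> lexp (p n) (mu n) LB1 (wv (p n) (mu n) (r n)) - (1 - r n) * wv (p n) (mu n) (r n) LB1)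
     \<and> (Hq (mu n * rh n) (mu n) (rh n) t < 0 \<longrightarrow> lexp (p n) (mu n) LB1 (wv (p n) (mu n) (r n)) - (1 - r n) * wv (p n) (mu n) (r n) LB1 \<le> 0)"
    using ev_basic
  proof eventually_elim
    case (elim n)
    have Dpos: "Dv (p n) (mu n) (r n) > 0"
      using elim mpos[of n] unfolding p_def r_def Dv_Dm by simp
    have nz: "p n \<noteq> 0" "r n \<noteq> 1" "Dv (p n) (mu n) (r n) \<noteq> 0" using elim Dpos by auto
    note E = wv_eqs[OF nz]
    have "\<forall>s. s \<noteq> LB1 \<longrightarrow> s \<noteq> LA \<longrightarrow>
        lexp (p n) (mu n) s (wv (p n) (mu n) (r n)) = (1 - r n) * wv (p n) (mu n) (r n) s"
    proof (intro allI impI)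
      fix s assume "s \<noteq> LB1" "s \<noteq> LA" then show "lexp (p n) (mu n) s (wv (p n) (mu n) (r n)) = (1 - r n) * wv (p n) (mu n) (r n) s"
        using E by (cases s) auto
    qed
    moreover
    have B1: "(lexp (p n) (mu n) LB1 (wv (p n) (mu n) (r n)) - (1 - r n) * wv (p n) (mu n) (r n) LB1)
        * (p n * (1 - r n) * Dv (p n) (mu n) (r n)) = (mu n * rh n)^2 * Hq (mu n * rh n) (mu n) (rh n) t"
      using wv_B1[OF nz] Gh_Hq[of "mu n * rh n" "mu n" "rh n" t] unfolding p_def r_def by simp
    have pos1: "p n * (1 - r n) * Dv (p n) (mu n) (r n) > 0" using elim Dpos by simp
    have pos2: "(mu n * rh n)^2 > 0" using mpos[of n] rpos[of n] by simp
    have "(0 < Hq (mu n * rh n) (mu n) (rh n) t \<longrightarrow> 0 \<le> lexp (p n) (mu n) LB1 (wv (p n) (mu n) (r n)) - (1 - r n) * wv (p n) (mu n) (r n) LB1)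
     \<and> (Hq (mu n * rh n) (mu n) (rh n) t < 0 \<longrightarrow> lexp (p n) (mu n) LB1 (wv (p n) (mu n) (r n)) - (1 - r n) * wv (p n) (mu n) (r n) LB1 \<le> 0)"
      by (rule sign_help[OF B1 pos1 pos2])
    ultimately show ?case by blast
  qed
  show ?thesis
  proof (intro exI conjI impI)
    show "W \<longlonglongrightarrow> 1" "L \<longlonglongrightarrow> 1" by (fact W1, fact L1)
  next
    assume t1: "1 < t"
    have "\<forall>\<^sub>F n in sequentially. Hq (mu n * rh n) (mu n) (rh n) t > 0" using Hl by (rule order_tendstoD) (use t1 in simp)
    with ev_basic key show "\<forall>\<^sub>F n in sequentially. \<forall>k. (1 - r n)^k \<le> W n * surv (p n) (mu n) k LB0"
    proof eventually_elim
      case (elim n)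
      have F: "(1 - r n) * wv (p n) (mu n) (r n) s \<le> lexp (p n) (mu n) s (wv (p n) (mu n) (r n))" if "s \<noteq> LA" for s
      proof (cases "s = LB1")
        case True
        then show ?thesis using elim by simp
      next
        case False then show ?thesis using elim that by simp
      qed
      show ?case
      proof
        fix k
        have "(1 - r n)^k * wv (p n) (mu n) (r n) LB0 \<le> W n * surv (p n) (mu n) k LB0"
        proof (rule surv_lower)
          show "0 \<le> W n" using elim by (simp add: W_def Sg_def)
          show "wv (p n) (mu n) (r n) s \<le> W n" if "s \<noteq> LA" for s
            using that by (cases s) (auto simp: wv_def W_def Sg_def)
          show "wv (p n) (mu n) (r n) LA = 0" by (simp add: wv_def)
        qed (use elim F mpos[of n] in \<open>auto simp: less_imp_le\<close>)
        then show "(1 - r n)^k \<le> W n * surv (p n) (mu n) k LB0" by (simp add: wv_def)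
      qed
    qed
  next
    assume t1: "t < 1"
    have "\<forall>\<^sub>F n in sequentially. Hq (mu n * rh n) (mu n) (rh n) t < 0" using Hl by (rule order_tendstoD) (use t1 in simp)
    with ev_basic key show "\<forall>\<^sub>F n in sequentially. \<forall>k. L n * surv (p n) (mu n) k LB0 \<le> (1 - r n)^k"
    proof eventually_elim
      case (elim n)
      have F: "lexp (p n) (mu n) s (wv (p n) (mu n) (r n)) \<le> (1 - r n) * wv (p n) (mu n) (r n) s" if "s \<noteq> LA" for s
      proof (cases "s = LB1")
        case True
        then show ?thesis using elim by simp
      next
        case False then show ?thesis using elim that by simp
      qed
      have Lw: "L n \<le> wv (p n) (mu n) (r n) s" if "s \<noteq> LA" for s
        using that by (cases s) (auto simp: wv_def L_def Sg_def)
      show ?case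
      proof
        fix k
        have "L n * surv (p n) (mu n) k LB0 \<le> (1 - r n)^k * wv (p n) (mu n) (r n) LB0"
        proof (rule surv_upper)
          show "0 \<le> L n" using elim by (simp add: L_def)
          show "0 \<le> wv (p n) (mu n) (r n) s" for s
          proof (cases "s = LA")
            case True then show ?thesis by (simp add: wv_def)
          next
            case False then show ?thesis using Lw[OF False] elim by (simp add: L_def)
          qed
        qed (use elim F Lw mpos[of n] in \<open>auto simp: less_imp_le\<close>)
        then show "L n * surv (p n) (mu n) k LB0 \<le> (1 - r n)^k" by (simp add: wv_def)
      qed
    qed
  qed
qed



definition lmap :: "(bool \<times> nat) \<times> (bool \<times> nat) \<times> bool \<times> bool \<Rightarrow> ls" where
  "lmap s = (case s of (x, y, ix, iy) \<Rightarrow>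
     if \<not> ix \<and> \<not> iy then LA else if x = y then LB0
     else if ix \<and> iy then (if fst x \<noteq> fst y then LB1 else LB2)
     else (if fst x \<noteq> fst y then LO1 else LO2))"

definition valid :: "nat \<Rightarrow> nat \<Rightarrow> (bool \<times> nat) \<times> (bool \<times> nat) \<times> bool \<times> bool \<Rightarrow> bool" where
  "valid a b s = (case s of (x, y, ix, iy) \<Rightarrow> x \<in> bip_V a b \<and> y \<in> bip_V a b \<and> (x = y \<longrightarrow> ix = iy))"

lemma part_mem: "w \<in> bpart a b c \<longleftrightarrow> w \<in> bip_V a b \<and> fst w = c"
  by (simp add: bpart_def)

lemma move_x:
  assumes "x \<in> bip_V a b" "y \<in> bip_V a b" "x = y \<longrightarrow> ix = iy" "ix \<or> iy" and ab: "1 \<le> a" "1 \<le> b"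
  shows "(\<Sum>w\<in>bpart a b (\<not> fst x). g (lmap (infect (w, y, ix, iy)))) / card (bpart a b (\<not> fst x)) =
    (if x = y then g LB1
     else if fst x \<noteq> fst y then g LB0 / card (bpart a b (fst y)) + (1 - 1 / card (bpart a b (fst y))) * g (if ix \<and> iy then LB2 else LO2)
     else g (if ix \<and> iy then LB1 else LO1))"
proof (cases "x = y")
  case True
  then have "ix" "iy" using assms by auto
  show ?thesis using True \<open>ix\<close> \<open>iy\<close>
    by (subst avg_const[where c="g LB1"]) (auto simp: finite_part part_mem infect_def lmap_def assms part_ne[OF ab])
next
  case False
  show ?thesis
  proof (cases "fst x \<noteq> fst y")
    case True
    have e: "bpart a b (\<not> fst x) = bpart a b (fst y)" using True by (cases "fst x"; cases "fst y") auto
    have "y \<in> bpart a b (fst y)" using assms by (simp add: part_mem)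
    then show ?thesis unfolding e using False True assms
      by (subst avg_one[where y=y and c="g (if ix \<and> iy then LB2 else LO2)"])
         (auto simp: finite_part part_mem infect_def lmap_def)
  next
    case False2: False
    have ne: "bpart a b (\<not> fst x) \<noteq> {}" by (rule part_ne[OF ab])
    show ?thesis using False False2 assms
      by (subst avg_const[where c="g (if ix \<and> iy then LB1 else LO1)"])
         (auto simp: finite_part part_mem infect_def lmap_def part_ne[OF ab])
  qed
qed

lemma move_y:
  assumes "x \<in> bip_V a b" "y \<in> bip_V a b" "x = y \<longrightarrow> ix = iy" "ix \<or> iy" and ab: "1 \<le> a" "1 \<le> b"
  shows "(\<Sum>w\<in>bpart a b (\<not> fst y). g (lmap (infect (x, w, ix, iy)))) / card (bpart a b (\<not> fst y)) =
    (if x = y then g LB1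
     else if fst x \<noteq> fst y then g LB0 / card (bpart a b (fst x)) + (1 - 1 / card (bpart a b (fst x))) * g (if ix \<and> iy then LB2 else LO2)
     else g (if ix \<and> iy then LB1 else LO1))"
proof (cases "x = y")
  case True
  then have "ix" "iy" using assms by auto
  show ?thesis using True \<open>ix\<close> \<open>iy\<close>
    by (subst avg_const[where c="g LB1"]) (auto simp: finite_part part_mem infect_def lmap_def assms part_ne[OF ab])
next
  case False
  show ?thesis
  proof (cases "fst x \<noteq> fst y")
    case True
    have e: "bpart a b (\<not> fst y) = bpart a b (fst x)" using True by (cases "fst x"; cases "fst y") auto
    have "x \<in> bpart a b (fst x)" using assms by (simp add: part_mem)
    then show ?thesis unfolding e using False True assms
      by (subst avg_one[where y=x and c="g (if ix \<and> iy then LB2 else LO2)"])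
         (auto simp: finite_part part_mem infect_def lmap_def)
  next
    case False2: False
    show ?thesis using False False2 assms
      by (subst avg_const[where c="g (if ix \<and> iy then LB1 else LO1)"])
         (auto simp: finite_part part_mem infect_def lmap_def part_ne[OF ab])
  qed
qed

lemma lump_step:
  assumes v: "valid a b (x, y, ix, iy)" and ns: "\<not> both_susceptible (x, y, ix, iy)"
    and ab: "1 \<le> a" "1 \<le> b"
  shows "pj * (1/2 * ((\<Sum>w\<in>bpart a b (\<not> fst x). g (lmap (infect (w, y, ix, iy)))) / card (bpart a b (\<not> fst x)))
             + 1/2 * ((\<Sum>w\<in>bpart a b (\<not> fst y). g (lmap (infect (x, w, ix, iy)))) / card (bpart a b (\<not> fst y))))
       + (1 - pj) * (1/2 * g (lmap (infect (x, y, False, iy))) + 1/2 * g (lmap (infect (x, y, ix, False))))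
       = lexp pj ((1/a + 1/b)/2) (lmap (x, y, ix, iy)) g"
proof -
  have xv: "x \<in> bip_V a b" and yv: "y \<in> bip_V a b" and xy: "x = y \<longrightarrow> ix = iy" using v by (auto simp: valid_def)
  have ii: "ix \<or> iy" using ns by (auto simp: both_susceptible_def)
  note mx = move_x[OF xv yv xy ii ab, of g] and my = move_y[OF xv yv xy ii ab, of g]
  have a0: "real a \<noteq> 0" "real b \<noteq> 0" using ab by auto
  show ?thesis
  proof (cases "x = y")
    case True
    then have "ix" "iy" using xy ii by auto
    then show ?thesis unfolding mx my using True by (simp add: lmap_def infect_def algebra_simps)
  next
    case F1: False
    show ?thesis
    proof (cases "fst x \<noteq> fst y")
      case True
      have cs: "1 / real (card (bpart a b (fst y))) + 1 / real (card (bpart a b (fst x))) = 1/a + 1/b"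
        using True by (cases "fst x"; cases "fst y") (auto simp: card_part)
      have e: "pj * (1/2 * (gB0 / card (bpart a b (fst y)) + (1 - 1 / card (bpart a b (fst y))) * gZ)
             + 1/2 * (gB0 / card (bpart a b (fst x)) + (1 - 1 / card (bpart a b (fst x))) * gZ))
           = pj * ((1/a + 1/b)/2) * gB0 + pj * (1 - (1/a + 1/b)/2) * gZ" for gB0 gZ
      proof -
        have nz: "real (card (bpart a b c)) \<noteq> 0" for c using ab by (simp add: card_part)
        have "pj * (1/2 * (gB0 / card (bpart a b (fst y)) + (1 - 1 / card (bpart a b (fst y))) * gZ)
             + 1/2 * (gB0 / card (bpart a b (fst x)) + (1 - 1 / card (bpart a b (fst x))) * gZ))
           = pj * ((1 / real (card (bpart a b (fst y))) + 1 / real (card (bpart a b (fst x))))/2) * gB0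
             + pj * (1 - (1 / real (card (bpart a b (fst y))) + 1 / real (card (bpart a b (fst x))))/2) * gZ"
          using nz by (simp add: field_simps)
        then show ?thesis unfolding cs .
      qed
      let ?Z = "if ix \<and> iy then LB2 else LO2"
      have mx': "(\<Sum>w\<in>bpart a b (\<not> fst x). g (lmap (infect (w, y, ix, iy)))) / card (bpart a b (\<not> fst x))
          = g LB0 / card (bpart a b (fst y)) + (1 - 1 / card (bpart a b (fst y))) * g ?Z"
        using mx F1 True by simp
      have my': "(\<Sum>w\<in>bpart a b (\<not> fst y). g (lmap (infect (x, w, ix, iy)))) / card (bpart a b (\<not> fst y))
          = g LB0 / card (bpart a b (fst x)) + (1 - 1 / card (bpart a b (fst x))) * g ?Z"
        using my F1 True by simp
      show ?thesis unfolding mx' my' e using F1 True ii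
        by (cases ix; cases iy) (auto simp: lmap_def infect_def algebra_simps)
    next
      case False
      then show ?thesis unfolding mx my using F1 ii
        by (cases ix; cases iy) (auto simp: lmap_def infect_def algebra_simps)
    qed
  qed
qed

lemma lexp_one_minus: "lexp p mu t (\<lambda>x. 1 - f x) = 1 - lexp p mu t f"
  by (cases t) (simp_all add: field_simps)

lemma hit_abs: "\<bar>hit_within K A k s\<bar> \<le> 1"
  using hit_bounds[of K A k s] by (simp add: abs_le_iff)

lemma valid_infect: "x \<in> bip_V a b \<Longrightarrow> y \<in> bip_V a b \<Longrightarrow> valid a b (infect (x, y, ix, iy))"
  by (auto simp: valid_def infect_def)

lemma lmap_LA: "lmap s = LA \<longleftrightarrow> both_susceptible s"
  by (cases s) (auto simp: lmap_def both_susceptible_def)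

lemma part_sub: "w \<in> bpart a b c \<Longrightarrow> w \<in> bip_V a b"
  by (simp add: part_mem)

lemma lump_hit:
  fixes lam gam :: real
  assumes ab: "1 \<le> a" "1 \<le> b" and p0: "0 \<le> lam / (lam + gam)" and p1: "lam / (lam + gam) \<le> 1"
  shows "valid a b s \<Longrightarrow> hit_within (epi_step (bip_V a b) bip_E lam gam) both_susceptible k s
      = 1 - surv (lam / (lam + gam)) ((1/a + 1/b)/2) k (lmap s)"
proof (induction k arbitrary: s)
  case 0
  then show ?case using lmap_LA[of s] by simp
next
  case (Suc k)
  let ?pj = "lam / (lam + gam)" and ?mu = "(1/a + 1/b)/2"
  let ?K = "epi_step (bip_V a b) bip_E lam gam"
  let ?H = "hit_within ?K both_susceptible k"
  let ?S = "surv ?pj ?mu k"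
  obtain x y ix iy where s: "s = (x, y, ix, iy)" by (cases s) auto
  show ?case
  proof (cases "both_susceptible s")
    case True
    then show ?thesis using lmap_LA[of s] by simp
  next
    case ns: False
    have xv: "x \<in> bip_V a b" and yv: "y \<in> bip_V a b" using Suc.prems s by (auto simp: valid_def)
    have h: "?H (infect (u, v, jx, jy)) = 1 - ?S (lmap (infect (u, v, jx, jy)))"
      if "u \<in> bip_V a b" "v \<in> bip_V a b" for u v jx jy
      using Suc.IH[OF valid_infect[OF that]] .
    have S1: "(\<Sum>w\<in>bpart a b (\<not> fst x). ?H (infect (w, y, ix, iy)))
        = (\<Sum>w\<in>bpart a b (\<not> fst x). (\<lambda>t. 1 - ?S t) (lmap (infect (w, y, ix, iy))))"
      by (rule sum.cong) (auto intro!: h part_sub yv)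
    have S2: "(\<Sum>w\<in>bpart a b (\<not> fst y). ?H (infect (x, w, ix, iy)))
        = (\<Sum>w\<in>bpart a b (\<not> fst y). (\<lambda>t. 1 - ?S t) (lmap (infect (x, w, ix, iy))))"
      by (rule sum.cong) (auto intro!: h part_sub xv)
    have "hit_within ?K both_susceptible (Suc k) s = measure_pmf.expectation (?K s) ?H"
      using ns by simp
    also have "\<dots> = ?pj * (1/2 * measure_pmf.expectation (walk_step (bip_V a b) bip_E x) (\<lambda>x'. ?H (infect (x', y, ix, iy)))
                       + 1/2 * measure_pmf.expectation (walk_step (bip_V a b) bip_E y) (\<lambda>y'. ?H (infect (x, y', ix, iy))))
        + (1 - ?pj) * (1/2 * ?H (infect (x, y, False, iy)) + 1/2 * ?H (infect (x, y, ix, False)))"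
      unfolding s by (rule epi_exp[where B=1]) (use hit_abs p0 p1 in auto)
    also have "\<dots> = ?pj * (1/2 * ((\<Sum>w\<in>bpart a b (\<not> fst x). (\<lambda>t. 1 - ?S t) (lmap (infect (w, y, ix, iy)))) / card (bpart a b (\<not> fst x)))
             + 1/2 * ((\<Sum>w\<in>bpart a b (\<not> fst y). (\<lambda>t. 1 - ?S t) (lmap (infect (x, w, ix, iy)))) / card (bpart a b (\<not> fst y))))
       + (1 - ?pj) * (1/2 * (\<lambda>t. 1 - ?S t) (lmap (infect (x, y, False, iy))) + 1/2 * (\<lambda>t. 1 - ?S t) (lmap (infect (x, y, ix, False))))"
      unfolding walk_exp[OF ab] S1[symmetric] S2[symmetric] h[OF xv yv] by simp
    also have "\<dots> = lexp ?pj ?mu (lmap (x, y, ix, iy)) (\<lambda>t. 1 - ?S t)"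
      by (rule lump_step) (use Suc.prems ns s ab in auto)
    also have "\<dots> = 1 - surv ?pj ?mu (Suc k) (lmap s)"
      using ns lmap_LA[of s] s by (simp add: lexp_one_minus)
    finally show ?thesis .
  qed
qed


definition mform :: "real \<Rightarrow> nat \<Rightarrow> (bool \<times> nat) \<times> (bool \<times> nat) \<Rightarrow> real" where
  "mform mu k s = (if fst s = snd s then 1 else if fst (fst s) \<noteq> fst (snd s) then 1 - (1-mu)^((k+1) div 2) else 1 - (1-mu)^(k div 2))"

lemma meet_hit:
  assumes ab: "1 \<le> a" "1 \<le> b"
  shows "x \<in> bip_V a b \<Longrightarrow> y \<in> bip_V a b \<Longrightarrow>
    hit_within (pair_step (bip_V a b) bip_E) (\<lambda>p. fst p = snd p) k (x, y) = mform ((1/a + 1/b)/2) k (x, y)"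
proof (induction k arbitrary: x y)
  case 0
  then show ?case by (simp add: mform_def)
next
  case (Suc k)
  let ?mu = "(1/a + 1/b)/2"
  let ?K = "pair_step (bip_V a b) bip_E"
  let ?H = "hit_within ?K (\<lambda>p. fst p = snd p) k"
  show ?case
  proof (cases "x = y")
    case True then show ?thesis by (simp add: mform_def)
  next
    case xy: False
    have nz: "real (card (bpart a b c)) \<noteq> 0" for c using ab by (simp add: card_part)
    have "hit_within ?K (\<lambda>p. fst p = snd p) (Suc k) (x, y) = measure_pmf.expectation (?K (x, y)) ?H"
      using xy by simp
    also have "\<dots> = 1/2 * ((\<Sum>w\<in>bpart a b (\<not> fst x). ?H (w, y)) / card (bpart a b (\<not> fst x)))
        + 1/2 * ((\<Sum>w\<in>bpart a b (\<not> fst y). ?H (x, w)) / card (bpart a b (\<not> fst y)))"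
      by (subst pair_exp[where B=1]) (simp_all add: hit_abs walk_exp[OF ab])
    also have "(\<Sum>w\<in>bpart a b (\<not> fst x). ?H (w, y)) = (\<Sum>w\<in>bpart a b (\<not> fst x). mform ?mu k (w, y))"
      by (rule sum.cong) (auto intro!: Suc.IH part_sub Suc.prems)
    also have "(\<Sum>w\<in>bpart a b (\<not> fst y). ?H (x, w)) = (\<Sum>w\<in>bpart a b (\<not> fst y). mform ?mu k (x, w))"
      by (rule sum.cong) (auto intro!: Suc.IH part_sub Suc.prems)
    finally have eq: "hit_within ?K (\<lambda>p. fst p = snd p) (Suc k) (x, y) =
        1/2 * ((\<Sum>w\<in>bpart a b (\<not> fst x). mform ?mu k (w, y)) / card (bpart a b (\<not> fst x)))
        + 1/2 * ((\<Sum>w\<in>bpart a b (\<not> fst y). mform ?mu k (x, w)) / card (bpart a b (\<not> fst y)))" .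
    show ?thesis
    proof (cases "fst x \<noteq> fst y")
      case True
      let ?c = "(1 - ?mu)^(k div 2)"
      have e1: "bpart a b (\<not> fst x) = bpart a b (fst y)" "bpart a b (\<not> fst y) = bpart a b (fst x)"
        using True by (cases "fst x"; cases "fst y"; simp)+
      have A1: "(\<Sum>w\<in>bpart a b (fst y). mform ?mu k (w, y)) / card (bpart a b (fst y))
          = 1 / card (bpart a b (fst y)) + (1 - 1 / card (bpart a b (fst y))) * (1 - ?c)"
        by (subst avg_one[where y=y and c="1 - ?c"]) (use Suc.prems in \<open>auto simp: finite_part part_mem mform_def\<close>)
      have A2: "(\<Sum>w\<in>bpart a b (fst x). mform ?mu k (x, w)) / card (bpart a b (fst x))
          = 1 / card (bpart a b (fst x)) + (1 - 1 / card (bpart a b (fst x))) * (1 - ?c)"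
        by (subst avg_one[where y=x and c="1 - ?c"]) (use Suc.prems in \<open>auto simp: finite_part part_mem mform_def\<close>)
      have cs: "1 / real (card (bpart a b (fst y))) + 1 / real (card (bpart a b (fst x))) = 1/a + 1/b"
        using True by (cases "fst x"; cases "fst y") (auto simp: card_part)
      have "hit_within ?K (\<lambda>p. fst p = snd p) (Suc k) (x, y)
          = 1/2 * (1 / card (bpart a b (fst y)) + (1 - 1 / card (bpart a b (fst y))) * (1 - ?c))
          + 1/2 * (1 / card (bpart a b (fst x)) + (1 - 1 / card (bpart a b (fst x))) * (1 - ?c))"
        unfolding eq e1 A1 A2 ..
      also have "\<dots> = 1 - (1 - (1 / real (card (bpart a b (fst y))) + 1 / real (card (bpart a b (fst x))))/2) * ?c"
        by (simp add: field_simps nz)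
      also have "\<dots> = 1 - (1 - ?mu) * ?c" unfolding cs ..
      also have "\<dots> = mform ?mu (Suc k) (x, y)"
        using True xy by (simp add: mform_def)
      finally show ?thesis .
    next
      case False
      have e1: "bpart a b (\<not> fst x) = bpart a b (\<not> fst y)" using False by simp
      have A1: "(\<Sum>w\<in>bpart a b (\<not> fst x). mform ?mu k (w, y)) / card (bpart a b (\<not> fst x)) = 1 - (1 - ?mu)^((k+1) div 2)"
        by (rule avg_const) (use Suc.prems False part_ne[OF ab] in \<open>auto simp: finite_part part_mem mform_def\<close>)
      have A2: "(\<Sum>w\<in>bpart a b (\<not> fst y). mform ?mu k (x, w)) / card (bpart a b (\<not> fst y)) = 1 - (1 - ?mu)^((k+1) div 2)"
        by (rule avg_const) (use Suc.prems False part_ne[OF ab] in \<open>auto simp: finite_part part_mem mform_def\<close>)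
      show ?thesis unfolding eq A1 A2 using False xy by (simp add: mform_def)
    qed
  qed
qed


lemma squeeze_param:
  fixes a :: "nat \<Rightarrow> real" and g :: "real \<Rightarrow> real"
  assumes cont: "isCont g 1"
    and lo: "\<And>t. 1 < t \<Longrightarrow> t < 2 \<Longrightarrow> \<exists>b. b \<longlonglongrightarrow> g t \<and> (\<forall>\<^sub>F n in sequentially. b n \<le> a n)"
    and hi: "\<And>t. 0 < t \<Longrightarrow> t < 1 \<Longrightarrow> \<exists>c. c \<longlonglongrightarrow> g t \<and> (\<forall>\<^sub>F n in sequentially. a n \<le> c n)"
  shows "a \<longlonglongrightarrow> g 1"
proof (rule order_tendstoI)
  have gl: "(g \<longlongrightarrow> g 1) (at 1)" using cont by (simp add: isCont_def)
  fix y assume y: "y < g 1"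
  have "\<forall>\<^sub>F t in at 1. y < g t" using gl y by (rule order_tendstoD)
  then obtain d where d: "d > 0" "\<And>t. t \<noteq> 1 \<Longrightarrow> dist t 1 < d \<Longrightarrow> y < g t"
    unfolding eventually_at by blast
  define t where "t = 1 + min d 1 / 2"
  have t: "1 < t" "t < 2" "y < g t" using d by (auto simp: t_def dist_real_def intro!: d(2))
  obtain b where b: "b \<longlonglongrightarrow> g t" "\<forall>\<^sub>F n in sequentially. b n \<le> a n" using lo[OF t(1,2)] by blast
  have "\<forall>\<^sub>F n in sequentially. y < b n" using b(1) t(3) by (rule order_tendstoD)
  with b(2) show "\<forall>\<^sub>F n in sequentially. y < a n" by eventually_elim auto
next
  have gl: "(g \<longlongrightarrow> g 1) (at 1)" using cont by (simp add: isCont_def)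
  fix y assume y: "g 1 < y"
  have "\<forall>\<^sub>F t in at 1. g t < y" using gl y by (rule order_tendstoD)
  then obtain d where d: "d > 0" "\<And>t. t \<noteq> 1 \<Longrightarrow> dist t 1 < d \<Longrightarrow> g t < y"
    unfolding eventually_at by blast
  define t where "t = 1 - min d 1 / 2"
  have t: "0 < t" "t < 1" "g t < y" using d by (auto simp: t_def dist_real_def intro!: d(2))
  obtain c where c: "c \<longlonglongrightarrow> g t" "\<forall>\<^sub>F n in sequentially. a n \<le> c n" using hi[OF t(1,2)] by blast
  have "\<forall>\<^sub>F n in sequentially. c n < y" using c(1) t(3) by (rule order_tendstoD)
  with c(2) show "\<forall>\<^sub>F n in sequentially. a n < y" by eventually_elim auto
qed

lemma pois_sums: fixes M c :: real shows "(\<lambda>k. exp (-M) * M^k / fact k * c^k) sums (exp (-M * (1 - c)))"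
proof -
  have "(\<lambda>k. (M*c)^k /\<^sub>R fact k) sums exp (M*c)" by (rule exp_converges)
  then have "(\<lambda>k. exp (-M) * ((M*c)^k /\<^sub>R fact k)) sums (exp (-M) * exp (M*c))" by (rule sums_mult)
  moreover have "exp (-M) * exp (M*c) = exp (-M * (1 - c))"
  proof -
    have "exp (-M * (1 - c)) = exp (-M + M*c)" by (simp add: algebra_simps)
    also have "\<dots> = exp (-M) * exp (M*c)" using exp_add[of "-M" "M*c"] by simp
    finally show ?thesis by simp
  qed
  ultimately show ?thesis by (simp add: power_mult_distrib divide_inverse algebra_simps)
qed

lemma pois_bounds:
  fixes S :: "nat \<Rightarrow> real"
  assumes S: "\<And>k. 0 \<le> S k" "\<And>k. S k \<le> 1" and M: "0 \<le> M"
  defines "P \<equiv> \<lambda>k. exp (-M) * M^k / fact k"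
  shows "summable (\<lambda>k. P k * S k)"
    and "(\<And>k. (1 - r)^k \<le> W * S k) \<Longrightarrow> exp (-M * r) \<le> W * (\<Sum>k. P k * S k)"
    and "(\<And>k. L * S k \<le> (1 - r)^k) \<Longrightarrow> L * (\<Sum>k. P k * S k) \<le> exp (-M * r)"
    and "(\<Sum>k. P k * (1 - S k)) = 1 - (\<Sum>k. P k * S k)"
proof -
  have P0: "0 \<le> P k" for k using M by (simp add: P_def)
  have s1: "P sums 1" using pois_sums[of M 1] by (simp add: P_def)
  show sm: "summable (\<lambda>k. P k * S k)"
    by (rule summable_comparison_test'[where g=P]) (use s1 P0 S in \<open>auto simp: sums_summable mult_le_cancel_left1 intro!: mult_left_le\<close>)
  have sr: "(\<lambda>k. P k * (1 - r)^k) sums exp (-M * r)" using pois_sums[of M "1 - r"] by (simp add: P_def)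
  show "exp (-M * r) \<le> W * (\<Sum>k. P k * S k)" if h: "\<And>k. (1 - r)^k \<le> W * S k"
  proof -
    have "exp (-M * r) = (\<Sum>k. P k * (1 - r)^k)" using sr by (simp add: sums_iff)
    also have "\<dots> \<le> (\<Sum>k. W * (P k * S k))"
    proof (rule suminf_le)
      show "P n * (1 - r)^n \<le> W * (P n * S n)" for n
        using mult_left_mono[OF h[of n] P0[of n]] by (simp add: algebra_simps)
      show "summable (\<lambda>k. P k * (1 - r)^k)" using sr by (simp add: sums_iff)
      show "summable (\<lambda>k. W * (P k * S k))" using sm by (rule summable_mult)
    qed
    also have "\<dots> = W * (\<Sum>k. P k * S k)" using sm by (rule suminf_mult)
    finally show ?thesis .
  qed
  show "L * (\<Sum>k. P k * S k) \<le> exp (-M * r)" if h: "\<And>k. L * S k \<le> (1 - r)^k"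
  proof -
    have "L * (\<Sum>k. P k * S k) = (\<Sum>k. L * (P k * S k))" using sm by (rule suminf_mult[symmetric])
    also have "\<dots> \<le> (\<Sum>k. P k * (1 - r)^k)"
    proof (rule suminf_le)
      show "L * (P n * S n) \<le> P n * (1 - r)^n" for n
        using mult_left_mono[OF h[of n] P0[of n]] by (simp add: algebra_simps)
      show "summable (\<lambda>k. P k * (1 - r)^k)" using sr by (simp add: sums_iff)
      show "summable (\<lambda>k. L * (P k * S k))" using sm by (rule summable_mult)
    qed
    also have "\<dots> = exp (-M * r)" using sr by (simp add: sums_iff)
    finally show ?thesis .
  qed
  have "(\<Sum>k. P k * (1 - S k)) = (\<Sum>k. P k - P k * S k)" by (simp add: algebra_simps)
  also have "\<dots> = (\<Sum>k. P k) - (\<Sum>k. P k * S k)" by (rule suminf_diff[symmetric]) (use s1 sm in \<open>auto simp: sums_summable\<close>)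
  also have "(\<Sum>k. P k) = 1" using s1 by (simp add: sums_iff)
  finally show "(\<Sum>k. P k * (1 - S k)) = 1 - (\<Sum>k. P k * S k)" .
qed

lemma ln_lim: "((\<lambda>z::real. ln (1 - z) / z) \<longlongrightarrow> -1) (at_right 0)"
  by real_asymp


lemma epi_limit:
  fixes a b :: "nat \<Rightarrow> nat" and lam gam \<tau> :: "nat \<Rightarrow> real" and v0 :: "nat \<Rightarrow> bool \<times> nat" and x :: real
  assumes good: "\<forall>\<^sub>F n in sequentially. 1 \<le> a n \<and> 1 \<le> b n \<and> 0 < lam n \<and> 0 < gam n \<and> v0 n \<in> bip_V (a n) (b n) \<and> 0 \<le> \<tau> n"
    and mu0: "(\<lambda>n. (1/a n + 1/b n)/2) \<longlonglongrightarrow> 0"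
    and rh0: "(\<lambda>n. (gam n/(lam n+gam n)) / ((1/a n+1/b n)/2)) \<longlonglongrightarrow> 0"
    and K: "(\<lambda>n. 2*(lam n+gam n)*\<tau> n * (gam n/(lam n+gam n))^2 / ((1/a n + 1/b n)/2)) \<longlonglongrightarrow> x"
  shows "(\<lambda>n. end_cdf (bip_V (a n) (b n)) bip_E (lam n) (gam n) (v0 n) (\<tau> n)) \<longlonglongrightarrow> 1 - exp (-x)"
proof -
  define G where "G = (\<lambda>n. 1 \<le> a n \<and> 1 \<le> b n \<and> 0 < lam n \<and> 0 < gam n \<and> v0 n \<in> bip_V (a n) (b n) \<and> 0 \<le> \<tau> n)"
  have evG: "\<forall>\<^sub>F n in sequentially. G n" using good by (simp add: G_def)
  define mu where "mu = (\<lambda>n. (1/real (a n) + 1/real (b n))/2)"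
  define q where "q = (\<lambda>n. gam n/(lam n+gam n))"
  define pj where "pj = (\<lambda>n. lam n/(lam n+gam n))"
  define rh where "rh = (\<lambda>n. q n / mu n)"
  define M where "M = (\<lambda>n. 2*(lam n+gam n)*\<tau> n)"
  define mu' where "mu' = (\<lambda>n. if G n then mu n else 1)"
  define rh' where "rh' = (\<lambda>n. if G n then rh n else 1)"
  define Ss where "Ss = (\<lambda>n. \<Sum>k. exp (- M n) * M n ^ k / fact k * surv (pj n) (mu n) k LB0)"
  have Gfacts: "mu n > 0" "mu n \<le> 1" "q n > 0" "rh n > 0" "mu n * rh n = q n" "1 - q n = pj n"
     "0 \<le> pj n" "pj n \<le> 1" "M n \<ge> 0" if "G n" for n
  proof -
    have ab: "real (a n) \<ge> 1" "real (b n) \<ge> 1" "lam n > 0" "gam n > 0" "\<tau> n \<ge> 0" using that by (auto simp: G_def)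
    have h: "1/real (a n) \<le> 1" "1/real (b n) \<le> 1" "1/real (a n) > 0" "1/real (b n) > 0" using ab by auto
    show "mu n > 0" unfolding mu_def by (rule divide_pos_pos[OF add_pos_pos[OF h(3) h(4)]]) simp
    show "mu n \<le> 1" unfolding mu_def using add_mono[OF h(1) h(2)] by simp
    show "q n > 0" using ab by (simp add: q_def)
    then show "rh n > 0" using \<open>mu n > 0\<close> by (simp add: rh_def)
    show "mu n * rh n = q n" using \<open>mu n > 0\<close> by (simp add: rh_def)
    show "1 - q n = pj n" using ab by (simp add: q_def pj_def field_simps)
    show "0 \<le> pj n" "pj n \<le> 1" using ab by (auto simp: pj_def)
    show "M n \<ge> 0" using ab by (simp add: M_def)
  qed
  have mu'pos: "mu' n > 0" and rh'pos: "rh' n > 0" for n using Gfacts by (auto simp: mu'_def rh'_def)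
  have mu'0: "mu' \<longlonglongrightarrow> 0"
  proof -
    have "\<forall>\<^sub>F n in sequentially. mu n = mu' n" using evG by eventually_elim (simp add: mu'_def)
    then show ?thesis using mu0 unfolding mu_def[symmetric] by (rule Lim_transform_eventually[rotated])
  qed
  have rh'0: "rh' \<longlonglongrightarrow> 0"
  proof -
    have "\<forall>\<^sub>F n in sequentially. rh n = rh' n" using evG by eventually_elim (simp add: rh'_def)
    moreover have rhe: "rh = (\<lambda>n. (gam n/(lam n+gam n)) / ((1/a n+1/b n)/2))" unfolding rh_def q_def mu_def by simp
    ultimately show ?thesis using Lim_transform_eventually[OF rh0[folded rhe]] by blast
  qed
  have Kl: "(\<lambda>n. M n * q n * rh n) \<longlonglongrightarrow> x"
  proof -
    have "\<forall>\<^sub>F n in sequentially. 2*(lam n+gam n)*\<tau> n * (gam n/(lam n+gam n))^2 / ((1/a n + 1/b n)/2) = M n * q n * rh n"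
      using evG by eventually_elim (simp add: M_def q_def rh_def mu_def power2_eq_square)
    then show ?thesis using K by (rule Lim_transform_eventually[rotated])
  qed
  have surv01: "0 \<le> surv (pj n) (mu n) k t \<and> surv (pj n) (mu n) k t \<le> 1" if "G n" for n k t
    using surv_bounds[of "pj n" "mu n" k t] Gfacts[OF that] by simp
  have end_eq: "end_cdf (bip_V (a n) (b n)) bip_E (lam n) (gam n) (v0 n) (\<tau> n) = 1 - Ss n" if "G n" for n
  proof -
    have ab: "1 \<le> a n" "1 \<le> b n" "v0 n \<in> bip_V (a n) (b n)" "\<tau> n \<ge> 0" using that by (auto simp: G_def)
    have hit: "hit_within (epi_step (bip_V (a n) (b n)) bip_E (lam n) (gam n)) both_susceptible k (v0 n, v0 n, True, True)
        = 1 - surv (pj n) (mu n) k LB0" for k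
      using lump_hit[OF ab(1,2), of "lam n" "gam n" "(v0 n, v0 n, True, True)" k] Gfacts[OF that] ab
      by (simp add: valid_def lmap_def pj_def mu_def)
    have "end_cdf (bip_V (a n) (b n)) bip_E (lam n) (gam n) (v0 n) (\<tau> n)
        = (\<Sum>k. exp (- M n) * M n ^ k / fact k * (1 - surv (pj n) (mu n) k LB0))"
      using ab unfolding end_cdf_def hit by (simp add: M_def)
    also have "\<dots> = 1 - Ss n" unfolding Ss_def
      by (rule pois_bounds(4)) (use surv01[OF that] Gfacts[OF that] in auto)
    finally show ?thesis .
  qed
  have "Ss \<longlonglongrightarrow> exp (- (1 * x))"
  proof (rule squeeze_param[where g="\<lambda>t. exp (- (t * x))"])
    show "isCont (\<lambda>t. exp (- (t * x))) 1" by (intro continuous_intros)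
  next
    fix t :: real assume t: "1 < t" "t < 2"
    obtain W L where WL: "W \<longlonglongrightarrow> 1"
      "\<forall>\<^sub>F n in sequentially. \<forall>k. (1 - t * (mu' n * rh' n) * rh' n)^k \<le> W n * surv (1 - mu' n * rh' n) (mu' n) k LB0"
      using chain_bounds[OF mu'pos rh'pos mu'0 rh'0, of t] t by auto
    define bb where "bb = (\<lambda>n. exp (- (M n * (t * q n * rh n))) / W n)"
    have Kt: "(\<lambda>n. M n * (t * q n * rh n)) \<longlonglongrightarrow> x * t"
      using tendsto_mult[OF Kl tendsto_const[of t]] by (simp add: algebra_simps)
    have "bb \<longlonglongrightarrow> exp (- (x * t)) / 1"
      unfolding bb_def by (rule tendsto_divide[OF tendsto_exp[OF tendsto_minus[OF Kt]] WL(1)]) simp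
    moreover have "\<forall>\<^sub>F n in sequentially. bb n \<le> Ss n"
    proof -
      have "\<forall>\<^sub>F n in sequentially. W n > 0" using WL(1) by (rule order_tendstoD) simp
      with evG WL(2) show ?thesis
      proof eventually_elim
        case (elim n)
        note gf = Gfacts[OF elim(1)]
        have e: "mu' n = mu n" "rh' n = rh n" using elim by (auto simp: mu'_def rh'_def)
        have h: "(1 - t * q n * rh n)^k \<le> W n * surv (pj n) (mu n) k LB0" for k
          using elim(2) gf unfolding e by (simp add: mult.assoc)
        have "exp (- M n * (t * q n * rh n)) \<le> W n * Ss n"
          unfolding Ss_def by (rule pois_bounds(2)) (use surv01[OF elim(1)] gf h in auto)
        then show ?case using elim(3) by (simp add: bb_def divide_le_eq mult.commute)
      qed
    qed
    ultimately show "\<exists>b. b \<longlonglongrightarrow> exp (- (t * x)) \<and> (\<forall>\<^sub>F n in sequentially. b n \<le> Ss n)"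
      by (auto simp: mult.commute)
  next
    fix t :: real assume t: "0 < t" "t < 1"
    obtain W L where WL: "L \<longlonglongrightarrow> 1"
      "\<forall>\<^sub>F n in sequentially. \<forall>k. L n * surv (1 - mu' n * rh' n) (mu' n) k LB0 \<le> (1 - t * (mu' n * rh' n) * rh' n)^k"
      using chain_bounds[OF mu'pos rh'pos mu'0 rh'0, of t] t by auto
    define cc where "cc = (\<lambda>n. exp (- (M n * (t * q n * rh n))) / L n)"
    have Kt: "(\<lambda>n. M n * (t * q n * rh n)) \<longlonglongrightarrow> x * t"
      using tendsto_mult[OF Kl tendsto_const[of t]] by (simp add: algebra_simps)
    have "cc \<longlonglongrightarrow> exp (- (x * t)) / 1"
      unfolding cc_def by (rule tendsto_divide[OF tendsto_exp[OF tendsto_minus[OF Kt]] WL(1)]) simp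
    moreover have "\<forall>\<^sub>F n in sequentially. Ss n \<le> cc n"
    proof -
      have "\<forall>\<^sub>F n in sequentially. L n > 0" using WL(1) by (rule order_tendstoD) simp
      with evG WL(2) show ?thesis
      proof eventually_elim
        case (elim n)
        note gf = Gfacts[OF elim(1)]
        have e: "mu' n = mu n" "rh' n = rh n" using elim by (auto simp: mu'_def rh'_def)
        have h: "L n * surv (pj n) (mu n) k LB0 \<le> (1 - t * q n * rh n)^k" for k
          using elim(2) gf unfolding e by (simp add: mult.assoc)
        have "L n * Ss n \<le> exp (- M n * (t * q n * rh n))"
          unfolding Ss_def by (rule pois_bounds(3)) (use surv01[OF elim(1)] gf h in auto)
        then show ?case using elim(3) by (simp add: cc_def le_divide_eq mult.commute)
      qed
    qed
    ultimately show "\<exists>c. c \<longlonglongrightarrow> exp (- (t * x)) \<and> (\<forall>\<^sub>F n in sequentially. Ss n \<le> c n)"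
      by (auto simp: mult.commute)
  qed
  then have "(\<lambda>n. 1 - Ss n) \<longlonglongrightarrow> 1 - exp (-x)" by (intro tendsto_intros) simp
  moreover have "\<forall>\<^sub>F n in sequentially. 1 - Ss n = end_cdf (bip_V (a n) (b n)) bip_E (lam n) (gam n) (v0 n) (\<tau> n)"
    using evG by eventually_elim (simp add: end_eq)
  ultimately show ?thesis by (rule Lim_transform_eventually)
qed


lemma K_alg:
  fixes ss ll gg mm mu x :: real
  assumes "ss \<noteq> 0" "ll \<noteq> 0" "gg \<noteq> 0" "mm \<noteq> 0" "mu \<noteq> 0"
  shows "x * (1 / (ss / ll)) / (2 * (mm * mu)) = 2 * ss * (x / (4 * mm * gg\<^sup>2 / ll)) * (gg / ss)\<^sup>2 / mu"
  using assms by (simp add: field_simps power2_eq_square)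

lemma div2_bounds: "real n \<le> 2 * real ((n + 1) div 2)" "2 * real ((n + 1) div 2) \<le> real n + 1"
proof -
  have "n \<le> 2 * ((n + 1) div 2)" "2 * ((n + 1) div 2) \<le> n + 1" by presburger+
  then show "real n \<le> 2 * real ((n + 1) div 2)" "2 * real ((n + 1) div 2) \<le> real n + 1" by linarith+
qed

theorem mainTheorem6:
  fixes m :: "nat \<Rightarrow> nat"
    and u v v0 :: "nat \<Rightarrow> bool \<times> nat"
    and lam gam :: "nat \<Rightarrow> real"
  assumes m_inf: "filterlim m at_top sequentially"
    and m_small: "(\<lambda>n. real (m n) / real n) \<longlonglongrightarrow> 0"
    and edge: "\<forall>\<^sub>F n in sequentially.
                 u n \<in> bip_V (m n) (n - m n) \<and> v n \<in> bip_V (m n) (n - m n) \<and> bip_E (u n) (v n)"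
    and start: "\<forall>\<^sub>F n in sequentially. v0 n \<in> bip_V (m n) (n - m n)"
  shows "weak_conv (\<lambda>n x. meet_cdf (bip_V (m n) (n - m n)) bip_E (u n) (v n) (real (m n) * x))
                   (exp_cdf (1/4))
         \<and> ((filterlim lam at_top sequentially \<and> filterlim gam at_top sequentially
              \<and> (\<lambda>n. gam n / (lam n / real (m n))) \<longlonglongrightarrow> 0)
            \<longrightarrow> weak_conv (\<lambda>n x. end_cdf (bip_V (m n) (n - m n)) bip_E (lam n) (gam n) (v0 n)
                                   (x / (4 * real (m n) * (gam n)\<^sup>2 / lam n)))
                          (exp_cdf 1))"
proof -
  define b where "b = (\<lambda>n. n - m n)"
  define mu where "mu = (\<lambda>n. (1/real (m n) + 1/real (b n))/2)"
  have mI: "filterlim (\<lambda>n. real (m n)) at_top sequentially"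
    by (rule filterlim_compose[OF filterlim_real_sequentially m_inf])
  have invm: "(\<lambda>n. 1 / real (m n)) \<longlonglongrightarrow> 0"
    using tendsto_inverse_0_at_top[OF mI] by (simp add: divide_inverse)
  have E1: "\<forall>\<^sub>F n in sequentially. 1 \<le> m n" using m_inf by (simp add: filterlim_at_top)
  have E2: "\<forall>\<^sub>F n in sequentially. real (m n) / real n < 1/2" using m_small by (rule order_tendstoD) simp
  have E3: "\<forall>\<^sub>F n in sequentially. 0 < n" by (simp add: eventually_gt_at_top)
  have good: "\<forall>\<^sub>F n in sequentially. 1 \<le> m n \<and> m n \<le> b n \<and> real (b n) = real n - real (m n) \<and> 2 * real (m n) < real n"
    using E1 E2 E3
  proof eventually_elim
    case (elim n)
    then have "2 * real (m n) < real n" by (simp add: divide_less_eq)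
    then show ?case using elim by (auto simp: b_def of_nat_diff)
  qed
  have mb: "(\<lambda>n. real (m n) / real (b n)) \<longlonglongrightarrow> 0"
  proof -
    have "(\<lambda>n. (real (m n) / real n) / (1 - real (m n) / real n)) \<longlonglongrightarrow> 0 / (1 - 0)"
      by (intro tendsto_intros m_small) simp
    moreover have "\<forall>\<^sub>F n in sequentially. (real (m n) / real n) / (1 - real (m n) / real n) = real (m n) / real (b n)"
      using good E3 by eventually_elim (simp add: field_simps)
    ultimately show ?thesis by (simp add: Lim_transform_eventually)
  qed
  have mmu: "(\<lambda>n. real (m n) * mu n) \<longlonglongrightarrow> 1/2"
  proof -
    have "(\<lambda>n. (1 + real (m n) / real (b n)) / 2) \<longlonglongrightarrow> (1 + 0) / 2" by (intro tendsto_intros mb) simp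
    moreover have "\<forall>\<^sub>F n in sequentially. (1 + real (m n) / real (b n)) / 2 = real (m n) * mu n"
      using good by eventually_elim (simp add: mu_def field_simps)
    ultimately show ?thesis by (simp add: Lim_transform_eventually)
  qed
  have mu0: "mu \<longlonglongrightarrow> 0"
  proof -
    have "(\<lambda>n. (real (m n) * mu n) * (1 / real (m n))) \<longlonglongrightarrow> 1/2 * 0" by (intro tendsto_intros mmu invm)
    moreover have "\<forall>\<^sub>F n in sequentially. (real (m n) * mu n) * (1 / real (m n)) = mu n"
      using good by eventually_elim simp
    ultimately show ?thesis by (simp add: Lim_transform_eventually)
  qed
  have mupos: "\<forall>\<^sub>F n in sequentially. 0 < mu n \<and> mu n < 1 \<and> 1/(2 * real (m n)) \<le> mu n"
  proof -
    have "\<forall>\<^sub>F n in sequentially. mu n < 1" using mu0 by (rule order_tendstoD) simp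
    with good show ?thesis
    proof eventually_elim
      case (elim n)
      have p: "1 / real (b n) > 0" "1 / real (m n) > 0" using elim by auto
      have h1: "0 < mu n" unfolding mu_def by (rule divide_pos_pos[OF add_pos_pos[OF p(2) p(1)]]) simp
      have e: "1/(2 * real (m n)) = (1/real (m n))/2" by simp
      have h2: "1/(2 * real (m n)) \<le> mu n" unfolding e mu_def using p(1) by (simp add: divide_right_mono)
      show ?case using h1 h2 elim by simp
    qed
  qed
  show ?thesis
  proof (intro conjI impI)
    show "weak_conv (\<lambda>n x. meet_cdf (bip_V (m n) (n - m n)) bip_E (u n) (v n) (real (m n) * x)) (exp_cdf (1/4))"
      unfolding weak_conv_def
    proof (intro allI impI)
      fix x :: real
      show "(\<lambda>n. meet_cdf (bip_V (m n) (n - m n)) bip_E (u n) (v n) (real (m n) * x)) \<longlonglongrightarrow> exp_cdf (1/4) x"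
      proof (cases "x < 0")
        case True
        have "\<forall>\<^sub>F n in sequentially. meet_cdf (bip_V (m n) (n - m n)) bip_E (u n) (v n) (real (m n) * x) = exp_cdf (1/4) x"
          using E1 by eventually_elim (use True in \<open>simp add: meet_cdf_def exp_cdf_def mult_pos_neg\<close>)
        then show ?thesis by (simp add: tendsto_eventually)
      next
        case False
        then have x0: "0 \<le> x" by simp
        define j where "j = (\<lambda>n. (nat \<lfloor>real (m n) * x\<rfloor> + 1) div 2)"
        have jm: "(\<lambda>n. real (j n) / real (m n)) \<longlonglongrightarrow> x/2"
        proof (rule tendsto_sandwich[where f="\<lambda>n. x/2 - (1/real (m n))/2" and h="\<lambda>n. x/2 + (1/real (m n))/2"])
          show "(\<lambda>n. x/2 - (1/real (m n))/2) \<longlonglongrightarrow> x/2" by (rule tendsto_eq_rhs[OF tendsto_diff[OF tendsto_const tendsto_divide[OF invm tendsto_const]]]) simp_all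
          show "(\<lambda>n. x/2 + (1/real (m n))/2) \<longlonglongrightarrow> x/2" by (rule tendsto_eq_rhs[OF tendsto_add[OF tendsto_const tendsto_divide[OF invm tendsto_const]]]) simp_all
          show "\<forall>\<^sub>F n in sequentially. x/2 - (1/real (m n))/2 \<le> real (j n) / real (m n)"
            using E1
          proof eventually_elim
            case (elim n)
            let ?y = "real (m n) * x"
            have y0: "0 \<le> ?y" using x0 by simp
            have "?y - 1 < real (nat \<lfloor>?y\<rfloor>)" using y0 by linarith
            moreover have "real (nat \<lfloor>?y\<rfloor>) \<le> 2 * real (j n)" unfolding j_def by (rule div2_bounds)
            ultimately have h: "?y - 1 \<le> 2 * real (j n)" by linarith
            have mpos: "real (m n) > 0" using elim by simp
            have "(?y - 1)/2 / real (m n) \<le> real (j n) / real (m n)" using h mpos by (intro divide_right_mono) auto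
            moreover have "(?y - 1)/2 / real (m n) = x/2 - (1/real (m n))/2" using mpos by (simp add: field_simps)
            ultimately show ?case by simp
          qed
          show "\<forall>\<^sub>F n in sequentially. real (j n) / real (m n) \<le> x/2 + (1/real (m n))/2"
            using E1
          proof eventually_elim
            case (elim n)
            let ?y = "real (m n) * x"
            have y0: "0 \<le> ?y" using x0 by simp
            have "real (nat \<lfloor>?y\<rfloor>) \<le> ?y" using y0 by linarith
            moreover have "2 * real (j n) \<le> real (nat \<lfloor>?y\<rfloor>) + 1" unfolding j_def by (rule div2_bounds)
            ultimately have h: "2 * real (j n) \<le> ?y + 1" by linarith
            have mpos: "real (m n) > 0" using elim by simp
            have "real (j n) / real (m n) \<le> (?y + 1)/2 / real (m n)" using h mpos by (intro divide_right_mono) auto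
            moreover have "(?y + 1)/2 / real (m n) = x/2 + (1/real (m n))/2" using mpos by (simp add: field_simps)
            ultimately show ?case by simp
          qed
        qed
        have muF: "filterlim mu (at_right 0) sequentially"
          by (rule tendsto_imp_filterlim_at_right[OF mu0]) (use mupos in \<open>eventually_elim, auto\<close>)
        have lnl: "(\<lambda>n. ln (1 - mu n) / mu n) \<longlonglongrightarrow> -1"
          using filterlim_compose[OF ln_lim muF] .
        have "(\<lambda>n. (real (j n) / real (m n)) * (real (m n) * mu n) * (ln (1 - mu n) / mu n)) \<longlonglongrightarrow> x/2 * (1/2) * (-1)"
          by (intro tendsto_intros jm mmu lnl)
        moreover have "\<forall>\<^sub>F n in sequentially. (real (j n) / real (m n)) * (real (m n) * mu n) * (ln (1 - mu n) / mu n) = real (j n) * ln (1 - mu n)"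
          using good mupos by eventually_elim auto
        ultimately have "(\<lambda>n. real (j n) * ln (1 - mu n)) \<longlonglongrightarrow> -(x/4)" by (simp add: Lim_transform_eventually)
        then have "(\<lambda>n. 1 - exp (real (j n) * ln (1 - mu n))) \<longlonglongrightarrow> 1 - exp (-(x/4))" by (intro tendsto_intros)
        moreover have "\<forall>\<^sub>F n in sequentially. 1 - exp (real (j n) * ln (1 - mu n)) = meet_cdf (bip_V (m n) (n - m n)) bip_E (u n) (v n) (real (m n) * x)"
          using good mupos edge
        proof eventually_elim
          case (elim n)
          have ab: "1 \<le> m n" "1 \<le> n - m n" using elim by (auto simp: b_def)
          have uv: "u n \<noteq> v n" "fst (u n) \<noteq> fst (v n)" using elim by (auto simp: bip_E_def)
          have "meet_cdf (bip_V (m n) (n - m n)) bip_E (u n) (v n) (real (m n) * x) = mform (mu n) (nat \<lfloor>real (m n) * x\<rfloor>) (u n, v n)"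
          proof -
            have y0: "\<not> real (m n) * x < 0" using x0 by (simp add: not_less)
            show ?thesis using meet_hit[OF ab, of "u n" "v n" "nat \<lfloor>real (m n) * x\<rfloor>"] elim y0
              unfolding meet_cdf_def mu_def b_def by simp
          qed
          also have "\<dots> = 1 - (1 - mu n) ^ j n" using uv by (simp add: mform_def j_def)
          also have "(1 - mu n) ^ j n = exp (real (j n) * ln (1 - mu n))"
            using elim by (simp add: exp_of_nat_mult[symmetric] ln_realpow[symmetric] exp_ln)
          finally show ?case by simp
        qed
        ultimately have "(\<lambda>n. meet_cdf (bip_V (m n) (n - m n)) bip_E (u n) (v n) (real (m n) * x)) \<longlonglongrightarrow> 1 - exp (-(x/4))"
          by (simp add: Lim_transform_eventually)
        then show ?thesis using x0 by (simp add: exp_cdf_def)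
      qed
    qed
  next
    assume H: "filterlim lam at_top sequentially \<and> filterlim gam at_top sequentially \<and> (\<lambda>n. gam n / (lam n / real (m n))) \<longlonglongrightarrow> 0"
    have Elg: "\<forall>\<^sub>F n in sequentially. 0 < lam n \<and> 0 < gam n"
      using H by (auto simp: filterlim_at_top_dense intro: eventually_conj)
    show "weak_conv (\<lambda>n x. end_cdf (bip_V (m n) (n - m n)) bip_E (lam n) (gam n) (v0 n)
                                   (x / (4 * real (m n) * (gam n)\<^sup>2 / lam n))) (exp_cdf 1)"
      unfolding weak_conv_def
    proof (intro allI impI)
      fix x :: real
      define \<tau> where "\<tau> n = x / (4 * real (m n) * (gam n)\<^sup>2 / lam n)" for n
      have tpos: "\<forall>\<^sub>F n in sequentially. 0 < 4 * real (m n) * (gam n)\<^sup>2 / lam n"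
        using E1 Elg by eventually_elim auto
      have main: "(\<lambda>n. end_cdf (bip_V (m n) (n - m n)) bip_E (lam n) (gam n) (v0 n) (\<tau> n)) \<longlonglongrightarrow> exp_cdf 1 x"
      proof (cases "x < 0")
        case True
        have "\<forall>\<^sub>F n in sequentially. end_cdf (bip_V (m n) (n - m n)) bip_E (lam n) (gam n) (v0 n) (\<tau> n) = exp_cdf 1 x"
          using tpos
        proof eventually_elim
          case (elim n)
          have "\<tau> n < 0" unfolding \<tau>_def using divide_neg_pos[OF True elim] .
          then show ?case using True by (simp add: end_cdf_def exp_cdf_def)
        qed
        then show ?thesis by (simp add: tendsto_eventually)
      next
        case False
        show ?thesis
        proof (cases "x = 0")
          case True
          have "end_cdf (bip_V (m n) (n - m n)) bip_E (lam n) (gam n) (v0 n) (\<tau> n) = 0" for n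
          proof -
            have "(\<lambda>k. exp (- (2 * (lam n + gam n) * 0)) * (2 * (lam n + gam n) * 0) ^ k / fact k
               * hit_within (epi_step (bip_V (m n) (n - m n)) bip_E (lam n) (gam n)) both_susceptible k (v0 n, v0 n, True, True)) = (\<lambda>k. 0)"
            proof
              fix k show "exp (- (2 * (lam n + gam n) * 0)) * (2 * (lam n + gam n) * 0) ^ k / fact k
               * hit_within (epi_step (bip_V (m n) (n - m n)) bip_E (lam n) (gam n)) both_susceptible k (v0 n, v0 n, True, True) = 0"
                by (cases k) (simp_all add: both_susceptible_def)
            qed
            then show ?thesis using True by (simp add: \<tau>_def end_cdf_def)
          qed
          then show ?thesis using True by (simp add: exp_cdf_def)
        next
          case False2: False
          then have xpos: "0 < x" using False by simp
          have gl: "(\<lambda>n. gam n / lam n) \<longlonglongrightarrow> 0"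
          proof -
            have "(\<lambda>n. (gam n / (lam n / real (m n))) * (1 / real (m n))) \<longlonglongrightarrow> 0 * 0"
              by (intro tendsto_intros invm) (use H in simp)
            moreover have "\<forall>\<^sub>F n in sequentially. (gam n / (lam n / real (m n))) * (1 / real (m n)) = gam n / lam n"
              using E1 Elg by eventually_elim (simp add: field_simps)
            ultimately show ?thesis by (simp add: Lim_transform_eventually)
          qed
          have "(\<lambda>n. end_cdf (bip_V (m n) (b n)) bip_E (lam n) (gam n) (v0 n) (\<tau> n)) \<longlonglongrightarrow> 1 - exp (-x)"
          proof (rule epi_limit)
            show "\<forall>\<^sub>F n in sequentially. 1 \<le> m n \<and> 1 \<le> b n \<and> 0 < lam n \<and> 0 < gam n \<and> v0 n \<in> bip_V (m n) (b n) \<and> 0 \<le> \<tau> n"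
              using good Elg start tpos by eventually_elim (use xpos in \<open>auto simp: b_def \<tau>_def\<close>)
            show "(\<lambda>n. (1/real (m n) + 1/real (b n))/2) \<longlonglongrightarrow> 0" using mu0 by (simp add: mu_def)
            show "(\<lambda>n. (gam n/(lam n+gam n)) / ((1/real (m n)+1/real (b n))/2)) \<longlonglongrightarrow> 0"
            proof (rule tendsto_sandwich[where f="\<lambda>n. 0" and h="\<lambda>n. 2 * (gam n / (lam n / real (m n)))"])
              show "(\<lambda>n. 0) \<longlonglongrightarrow> (0::real)" by simp
              show "(\<lambda>n. 2 * (gam n / (lam n / real (m n)))) \<longlonglongrightarrow> 0" using tendsto_mult[OF tendsto_const H[THEN conjunct2, THEN conjunct2], of 2] by simp
              show "\<forall>\<^sub>F n in sequentially. 0 \<le> (gam n/(lam n+gam n)) / ((1/real (m n)+1/real (b n))/2)"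
                using Elg mupos by eventually_elim (auto simp: mu_def)
              show "\<forall>\<^sub>F n in sequentially. (gam n/(lam n+gam n)) / ((1/real (m n)+1/real (b n))/2) \<le> 2 * (gam n / (lam n / real (m n)))"
                using Elg mupos good
              proof eventually_elim
                case (elim n)
                have q1: "gam n/(lam n+gam n) \<le> gam n / lam n"
                  using elim by (intro frac_le) auto
                have m1: "1 / mu n \<le> 2 * real (m n)"
                  using elim by (auto simp: divide_simps) (metis le_divide_eq_1 less_eq_real_def mult.commute)
                have "(gam n/(lam n+gam n)) / mu n = (gam n/(lam n+gam n)) * (1 / mu n)" by simp
                also have "\<dots> \<le> (gam n / lam n) * (2 * real (m n))"
                  using elim q1 m1 by (intro mult_mono) auto
                also have "\<dots> = 2 * (gam n / (lam n / real (m n)))" using elim by (simp add: field_simps)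
                finally show ?case by (simp add: mu_def)
              qed
            qed
            show "(\<lambda>n. 2*(lam n+gam n)*\<tau> n * (gam n/(lam n+gam n))^2 / ((1/real (m n) + 1/real (b n))/2)) \<longlonglongrightarrow> x"
            proof -
              have "(\<lambda>n. x * (1 / (1 + gam n / lam n)) / (2 * (real (m n) * mu n))) \<longlonglongrightarrow> x * (1 / (1 + 0)) / (2 * (1/2))"
                by (intro tendsto_intros gl mmu) simp_all
              moreover have "\<forall>\<^sub>F n in sequentially. x * (1 / (1 + gam n / lam n)) / (2 * (real (m n) * mu n))
                  = 2*(lam n+gam n)*\<tau> n * (gam n/(lam n+gam n))^2 / ((1/real (m n) + 1/real (b n))/2)"
                using Elg mupos good
              proof eventually_elim
                case (elim n)
                then have nz: "lam n + gam n \<noteq> 0" "real (m n) \<noteq> 0" "lam n \<noteq> 0" "gam n \<noteq> 0" "mu n \<noteq> 0"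
                  "lam n + gam n > 0" "real (m n) > 0" by auto
                have e: "(1/real (m n) + 1/real (b n))/2 = mu n" by (simp add: mu_def)
                have e2: "1 + gam n / lam n = (lam n + gam n) / lam n" using nz by (simp add: field_simps)
                show ?case unfolding e e2 \<tau>_def by (rule K_alg) (use nz in auto)
              qed
              ultimately show ?thesis by (simp add: Lim_transform_eventually)
            qed
          qed
          then show ?thesis using xpos by (simp add: exp_cdf_def b_def)
        qed
      qed
      then show "(\<lambda>n. end_cdf (bip_V (m n) (n - m n)) bip_E (lam n) (gam n) (v0 n) (x / (4 * real (m n) * (gam n)\<^sup>2 / lam n))) \<longlonglongrightarrow> exp_cdf 1 x"
        by (simp add: \<tau>_def)
    qed
  qed
qed


end
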